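(* Assume $(\boldsymbol\lambda,\boldsymbol\mu)$ satisfies (H), with the notation of (H). 1) $\{d(\beta_x),d(\beta_y)\}=\{d(\beta_x+h),d(\beta_y-h)\}=\{d,d'\}$, and for every $b\in\{1,\dots,l\}$, $\#\{i:d(\alpha_i)=b\}=\#\{i:d(\beta_i)=b\}$; call this number $r_b$. 2) If $(\boldsymbol\lambda,\boldsymbol\mu)$ satisfies (J1), then $d(\beta_x)=d$ and $d(\beta_y)=d'$. Let $\boldsymbol\beta_{r_d}(\lambda^{(d)})=(g_1,\dots,g_{r_d})$, $\boldsymbol\beta_{r_d}(\mu^{(d)})=(e_1,\dots,e_{r_d})$, $\boldsymbol\beta_{r_{d'}}(\lambda^{(d')})=(g'_1,\dots,g'_{r_{d'}})$, $\boldsymbol\beta_{r_{d'}}(\mu^{(d')})=(e'_1,\dots,e'_{r_{d'}})$ (β-numbers of component $b$ computed with charge $s_b$). Let $b_0,c_0$ be the row indices of the tail and head of $\rho$, and $b'_0,c'_0$ those of $\rho'$. Let $k,k'$ be the integers with $\{k,k'\}=\{\beta_x+h,\beta_y-h\}$, $d(k)=d$, $d(k')=d'$. Then $e_{c_0}=\phi(\beta_x)$, $g_{b_0}=\phi(k)$, $g'_{c'_0}=\phi(k')$, $e'_{b'_0}=\phi(\beta_y)$, and $\hat h=\phi(k)-\phi(\beta_x)=\phi(\beta_y)-\phi(k')$. 3) If $(\boldsymbol\lambda,\boldsymbol\mu)$ satisfies (J2), let $\boldsymbol\beta_{r_d}(\lambda^{(d)})=(g_1,\dots)$, $\boldsymbol\beta_{r_d}(\mu^{(d)})=(e_1,\dots)$,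 $b_0,c_0$ the rows of tail and head of $\rho$, $b'_0,c'_0$ those of $\rho'$. Then $\lambda^{(d)}\lhd\mu^{(d)}$, and $e_{c_0}=\phi(\beta_x)$, $g_{b_0}=\phi(\beta_x+h)$, $g_{c'_0}=\phi(\beta_y-h)$, $e_{b'_0}=\phi(\beta_y)$, $\hat h=\phi(\beta_x+h)-\phi(\beta_x)=\phi(\beta_y)-\phi(\beta_y-h)$.
   Context: Fix $n,l,m\ge1$, $\mathbf s_l=(s_1,\dots,s_l)\in\mathbb Z^l$, $s=\sum s_b$. Partitions are identified with Young diagrams; $\Pi^l_m$ = $l$-tuples of partitions of total size $m$. Ribbon: nonempty connected skew diagram with no $2\times2$ square; head/tail = node with $j-i$ minimal/maximal; length = number of nodes. For a partition $\lambda$ with at most $r$ parts and a charge $t$, $\boldsymbol\beta_r(\lambda)=(\lambda_i+t+1-i)_{1\le i\le r}$; $\boldsymbol\beta(\lambda)=\boldsymbol\beta_{|\lambda|}(\lambda)$ with charge $s$, $B(\lambda)$ its set of entries. Each $k\in\mathbb Z$ is uniquely $k=c(k)+n(d(k)-1)+nl\,m(k)$, $c(k)\in\{1..n\}$, $d(k)\in\{1..l\}$, $m(k)\in\mathbb Z$; $\phi(k)=c(k)+n\,m(k)$ (here $d(\cdot)$ is a function, while $d,d'$ below are indices). $\boldsymbol\lambda\leftrightarrow\lambda$ iff $\{(\lambda^{(b)}_i+s_b+1-i,b)\}=\{(\phi(k),d(k)):k\in\{\lambda_i+s+1-i\}\}$. $\boldsymbol\lambda\prec\boldsymbol\mu$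 iff $\lambda\lhd\mu$ (strict dominance) for $\boldsymbol\lambda\leftrightarrow\lambda,\boldsymbol\mu\leftrightarrow\mu$. (J1): $\boldsymbol\lambda\ne\boldsymbol\mu$ and there are $d\ne d'$ with $\mu^{(d)}\subset\lambda^{(d)}$, $\lambda^{(d')}\subset\mu^{(d')}$, $\lambda^{(b)}=\mu^{(b)}$ otherwise, $\rho:=\lambda^{(d)}/\mu^{(d)}$, $\rho':=\mu^{(d')}/\lambda^{(d')}$ ribbons of common length $\hat h$. (J2): $\boldsymbol\lambda\ne\boldsymbol\mu$, there is $d$ with $\lambda^{(b)}=\mu^{(b)}$ for $b\ne d$, $\rho:=\lambda^{(d)}/(\lambda^{(d)}\cap\mu^{(d)})$, $\rho':=\mu^{(d)}/(\lambda^{(d)}\cap\mu^{(d)})$ ribbons of common length $\hat h$; put $d'=d$. (H): $\boldsymbol\lambda,\boldsymbol\mu\in\Pi^l_m$, $\boldsymbol\lambda\leftrightarrow\lambda$, $\boldsymbol\mu\leftrightarrow\mu$, $\boldsymbol\lambda\prec\boldsymbol\mu$, $|\lambda|=|\mu|=r$, $\#(B(\lambda)\cap B(\mu))=r-2$. Under (H): $\boldsymbol\beta(\lambda)=(\alpha_1,\dots,\alpha_r)$, $\boldsymbol\beta(\mu)=(\beta_1,\dots,\beta_r)$; $\theta=\lambda/(\lambda\cap\mu)$, $\theta'=\mu/(\lambda\cap\mu)$ are ribbons of a common length $h$; $y,y'$ are the rows of tail and head of $\theta'$, $x',x$ those of tail and head of $\theta$; one has $\{\alpha_i:i\ne x',y'\}=\{\beta_j:j\ne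 x,y\}$, $\alpha_{y'}=\beta_y-h$, $\alpha_{x'}=\beta_x+h$; and $(\boldsymbol\lambda,\boldsymbol\mu)$ satisfies (J1) or (J2), with $d,d',\hat h,\rho,\rho'$ as there. *)

theory Defs
  imports Main
begin

text \<open>A partition is a weakly decreasing list of positive naturals; rows are 1-indexed.\<close>

definition is_partition :: "nat list \<Rightarrow> bool" where
  "is_partition la \<longleftrightarrow> sorted_wrt (\<ge>) la \<and> (\<forall>x\<in>set la. 0 < x)"

definition part :: "nat list \<Rightarrow> nat \<Rightarrow> nat" where
  "part la i = (if 1 \<le> i \<and> i \<le> length la then la ! (i - 1) else 0)"

definition psize :: "nat list \<Rightarrow> nat" where
  "psize la = sum_list la"

definition diagram :: "nat list \<Rightarrow> (nat \<times> nat) set" where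
  "diagram la = {(i, j). 1 \<le> i \<and> 1 \<le> j \<and> j \<le> part la i}"

definition content :: "nat \<times> nat \<Rightarrow> int" where
  "content a = int (snd a) - int (fst a)"

definition node_adj :: "nat \<times> nat \<Rightarrow> nat \<times> nat \<Rightarrow> bool" where
  "node_adj a b \<longleftrightarrow>
     (fst a = fst b \<and> (snd a = snd b + 1 \<or> snd b = snd a + 1)) \<or>
     (snd a = snd b \<and> (fst a = fst b + 1 \<or> fst b = fst a + 1))"

definition edge_connected :: "(nat \<times> nat) set \<Rightarrow> bool" where
  "edge_connected S \<longleftrightarrow>
     (\<forall>a\<in>S. \<forall>b\<in>S. (a, b) \<in> {(u, v). u \<in> S \<and> v \<in> S \<and> node_adj u v}\<^sup>*)"

definition no_square :: "(nat \<times> nat) set \<Rightarrow> bool" where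
  "no_square S \<longleftrightarrow>
     \<not> (\<exists>i j. (i, j) \<in> S \<and> (i + 1, j) \<in> S \<and> (i, j + 1) \<in> S \<and> (i + 1, j + 1) \<in> S)"

definition ribbon :: "(nat \<times> nat) set \<Rightarrow> bool" where
  "ribbon S \<longleftrightarrow> S \<noteq> {} \<and> edge_connected S \<and> no_square S"

definition ribbon_head :: "(nat \<times> nat) set \<Rightarrow> nat \<times> nat" where
  "ribbon_head S = (THE a. a \<in> S \<and> (\<forall>b\<in>S. content a \<le> content b))"

definition ribbon_tail :: "(nat \<times> nat) set \<Rightarrow> nat \<times> nat" where
  "ribbon_tail S = (THE a. a \<in> S \<and> (\<forall>b\<in>S. content b \<le> content a))"

definition head_row :: "(nat \<times> nat) set \<Rightarrow> nat" where
  "head_row S = fst (ribbon_head S)"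

definition tail_row :: "(nat \<times> nat) set \<Rightarrow> nat" where
  "tail_row S = fst (ribbon_tail S)"

definition dom_le :: "nat list \<Rightarrow> nat list \<Rightarrow> bool" where
  "dom_le la mu \<longleftrightarrow> psize la = psize mu \<and>
     (\<forall>k. (\<Sum>i=1..k. part la i) \<le> (\<Sum>i=1..k. part mu i))"

definition dom_lt :: "nat list \<Rightarrow> nat list \<Rightarrow> bool" where
  "dom_lt la mu \<longleftrightarrow> dom_le la mu \<and> la \<noteq> mu"

definition beta_vec :: "nat \<Rightarrow> int \<Rightarrow> nat list \<Rightarrow> nat \<Rightarrow> int" where
  "beta_vec r t la i = (if 1 \<le> i \<and> i \<le> r then int (part la i) + t + 1 - int i else 0)"

definition Bset :: "int \<Rightarrow> nat list \<Rightarrow> int set" where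
  "Bset s la = {beta_vec (psize la) s la i | i. 1 \<le> i \<and> i \<le> psize la}"

section \<open>The decomposition k = c(k) + n(d(k)-1) + n l m(k)\<close>

definition m_of :: "nat \<Rightarrow> nat \<Rightarrow> int \<Rightarrow> int" where
  "m_of n l k = (k - 1) div (int n * int l)"

definition d_of :: "nat \<Rightarrow> nat \<Rightarrow> int \<Rightarrow> nat" where
  "d_of n l k = nat (((k - 1) mod (int n * int l)) div int n) + 1"

definition c_of :: "nat \<Rightarrow> nat \<Rightarrow> int \<Rightarrow> int" where
  "c_of n l k = ((k - 1) mod (int n * int l)) mod int n + 1"

definition phi :: "nat \<Rightarrow> nat \<Rightarrow> int \<Rightarrow> int" where
  "phi n l k = c_of n l k + int n * m_of n l k"

definition multipart :: "nat \<Rightarrow> nat \<Rightarrow> (nat \<Rightarrow> nat list) \<Rightarrow> bool" where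
  "multipart l m La \<longleftrightarrow> (\<forall>b. 1 \<le> b \<and> b \<le> l \<longrightarrow> is_partition (La b)) \<and>
     (\<forall>b. \<not> (1 \<le> b \<and> b \<le> l) \<longrightarrow> La b = []) \<and>
     (\<Sum>b=1..l. psize (La b)) = m"

definition total_charge :: "nat \<Rightarrow> (nat \<Rightarrow> int) \<Rightarrow> int" where
  "total_charge l sl = (\<Sum>b=1..l. sl b)"

definition corr :: "nat \<Rightarrow> nat \<Rightarrow> (nat \<Rightarrow> int) \<Rightarrow> (nat \<Rightarrow> nat list) \<Rightarrow> nat list \<Rightarrow> bool" where
  "corr n l sl La la \<longleftrightarrow>
     {(int (part (La b) i) + sl b + 1 - int i, b) | b i. 1 \<le> b \<and> b \<le> l \<and> 1 \<le> i} =
     {(phi n l k, d_of n l k) | k.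
        k \<in> {int (part la i) + total_charge l sl + 1 - int i | i. 1 \<le> i}}"

definition mprec :: "nat \<Rightarrow> nat \<Rightarrow> (nat \<Rightarrow> int) \<Rightarrow> (nat \<Rightarrow> nat list) \<Rightarrow> (nat \<Rightarrow> nat list) \<Rightarrow> bool" where
  "mprec n l sl La Mu \<longleftrightarrow>
     (\<forall>la mu. is_partition la \<longrightarrow> is_partition mu \<longrightarrow>
        corr n l sl La la \<longrightarrow> corr n l sl Mu mu \<longrightarrow> dom_lt la mu)"

definition J1 :: "nat \<Rightarrow> (nat \<Rightarrow> nat list) \<Rightarrow> (nat \<Rightarrow> nat list) \<Rightarrow> nat \<Rightarrow> nat \<Rightarrow> bool" where
  "J1 l La Mu d d' \<longleftrightarrow> La \<noteq> Mu \<and> d \<noteq> d' \<and> 1 \<le> d \<and> d \<le> l \<and> 1 \<le> d' \<and> d' \<le> l \<and>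
     diagram (Mu d) \<subseteq> diagram (La d) \<and> diagram (La d') \<subseteq> diagram (Mu d') \<and>
     (\<forall>b. 1 \<le> b \<and> b \<le> l \<and> b \<noteq> d \<and> b \<noteq> d' \<longrightarrow> La b = Mu b) \<and>
     ribbon (diagram (La d) - diagram (Mu d)) \<and>
     ribbon (diagram (Mu d') - diagram (La d')) \<and>
     card (diagram (La d) - diagram (Mu d)) = card (diagram (Mu d') - diagram (La d'))"

definition J2 :: "nat \<Rightarrow> (nat \<Rightarrow> nat list) \<Rightarrow> (nat \<Rightarrow> nat list) \<Rightarrow> nat \<Rightarrow> bool" where
  "J2 l La Mu d \<longleftrightarrow> La \<noteq> Mu \<and> 1 \<le> d \<and> d \<le> l \<and>
     (\<forall>b. 1 \<le> b \<and> b \<le> l \<and> b \<noteq> d \<longrightarrow> La b = Mu b) \<and>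
     ribbon (diagram (La d) - (diagram (La d) \<inter> diagram (Mu d))) \<and>
     ribbon (diagram (Mu d) - (diagram (La d) \<inter> diagram (Mu d))) \<and>
     card (diagram (La d) - (diagram (La d) \<inter> diagram (Mu d))) =
       card (diagram (Mu d) - (diagram (La d) \<inter> diagram (Mu d)))"

definition Hcond :: "nat \<Rightarrow> nat \<Rightarrow> nat \<Rightarrow> (nat \<Rightarrow> int) \<Rightarrow> (nat \<Rightarrow> nat list) \<Rightarrow> (nat \<Rightarrow> nat list)
    \<Rightarrow> nat list \<Rightarrow> nat list \<Rightarrow> nat \<Rightarrow> bool" where
  "Hcond n l m sl La Mu la mu r \<longleftrightarrow>
     multipart l m La \<and> multipart l m Mu \<and> is_partition la \<and> is_partition mu \<and>
     corr n l sl La la \<and> corr n l sl Mu mu \<and> mprec n l sl La Mu \<and>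
     psize la = r \<and> psize mu = r \<and>
     card (Bset (total_charge l sl) la \<inter> Bset (total_charge l sl) mu) = r - 2"

end

theory Submission
  imports Defs
begin


definition bvf :: "int \<Rightarrow> (nat \<Rightarrow> nat) \<Rightarrow> nat \<Rightarrow> int" where
  "bvf t P i = int (P i) + t + 1 - int i"
definition pfun :: "(nat \<Rightarrow> nat) \<Rightarrow> bool" where
  "pfun P \<longleftrightarrow> (\<forall>i j. 1 \<le> i \<longrightarrow> i \<le> j \<longrightarrow> P j \<le> P i) \<and> (\<exists>N. \<forall>i>N. P i = 0)"
definition cnt :: "(nat \<Rightarrow> int) \<Rightarrow> int \<Rightarrow> nat" where
  "cnt f w = card {i. 1 \<le> i \<and> w < f i}"
definition sdec :: "(nat \<Rightarrow> int) \<Rightarrow> bool" where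
  "sdec f \<longleftrightarrow> (\<forall>i j. 1 \<le> i \<longrightarrow> i < j \<longrightarrow> f j < f i)"

lemma sdec_bvf: "pfun P \<Longrightarrow> sdec (bvf t P)"
  unfolding pfun_def sdec_def bvf_def
  by (smt (verit, best) less_imp_le_nat of_nat_less_iff of_nat_mono)

lemma sdec_bound: assumes "sdec f" "1 \<le> i" shows "f i \<le> f 1 - int i + 1"
  using assms(2)
proof (induction i rule: dec_induct)
  case base then show ?case by simp
next
  case (step k)
  have "f (Suc k) < f k" using assms(1) step(1) unfolding sdec_def by auto
  then show ?case using step by simp
qed

lemma sdec_le_iff: "sdec f \<Longrightarrow> 1 \<le> i \<Longrightarrow> 1 \<le> j \<Longrightarrow> (f i \<le> f j \<longleftrightarrow> j \<le> i)"
  unfolding sdec_def by (metis linorder_not_le nat_less_le order_less_imp_le)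

lemma sdec_inj: "sdec f \<Longrightarrow> 1 \<le> i \<Longrightarrow> 1 \<le> j \<Longrightarrow> f i = f j \<Longrightarrow> i = j"
  by (metis sdec_le_iff order_refl le_antisym)

lemma cnt_iff: assumes f: "sdec f" and i: "1 \<le> i" shows "(w < f i \<longleftrightarrow> i \<le> cnt f w)"
proof -
  define S where "S = {i. 1 \<le> i \<and> w < f i}"
  have sub: "S \<subseteq> {1..nat (f 1 - w)}"
  proof
    fix j assume "j \<in> S"
    then have "1 \<le> j" "w < f j" by (auto simp: S_def)
    with sdec_bound[OF f \<open>1 \<le> j\<close>] show "j \<in> {1..nat (f 1 - w)}" by auto
  qed
  then have fin: "finite S" using finite_subset by blast
  have down: "j \<in> S" if "k \<in> S" "1 \<le> j" "j \<le> k" for j k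
    using that f unfolding S_def sdec_def by (auto, metis le_neq_implies_less order.strict_trans)
  show ?thesis
  proof
    assume "w < f i"
    then have "i \<in> S" using i by (simp add: S_def)
    then have "{1..i} \<subseteq> S" using down by auto
    then have "card {1..i} \<le> card S" using fin by (metis card_mono)
    then show "i \<le> cnt f w" by (simp add: cnt_def S_def)
  next
    assume le: "i \<le> cnt f w"
    show "w < f i"
    proof (rule ccontr)
      assume "\<not> w < f i"
      then have "i \<notin> S" by (simp add: S_def)
      then have "S \<subseteq> {1..<i}" using down i by (auto simp: S_def) (meson not_le)
      then have "card S \<le> card {1..<i}" by (metis card_mono finite_atLeastLessThan)
      then have "card S < i" using i by simp
      then show False using le by (simp add: cnt_def S_def)
    qed
  qed
qed

lemma cnt_mono: assumes "sdec f" "w \<le> w'" shows "cnt f w' \<le> cnt f w"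
proof (cases "cnt f w' = 0")
  case False
  then have "w' < f (cnt f w')" using cnt_iff[OF assms(1), of "cnt f w'" w'] by simp
  then have "w < f (cnt f w')" using assms(2) by simp
  then show ?thesis using cnt_iff[OF assms(1), of "cnt f w'" w] False by simp
qed simp

lemma cnt_step: assumes f: "sdec f" shows "cnt f (w - 1) \<le> cnt f w + 1"
proof (rule ccontr)
  assume "\<not> ?thesis"
  then obtain i where i: "i = cnt f (w - 1)" "i \<ge> cnt f w + 2" by auto
  then have "w - 1 < f i" using cnt_iff[OF f, of i "w-1"] by simp
  moreover have "f i < f (i - 1)" using f i unfolding sdec_def by auto
  ultimately have "w < f (i - 1)" by simp
  then have "i - 1 \<le> cnt f w" using cnt_iff[OF f, of "i - 1" w] i by simp
  then show False using i by simp
qed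

lemma eq_thresh:
  fixes x y lo hi :: int
  assumes "lo \<le> x" "lo \<le> y" "x \<le> hi" "y \<le> hi"
    and "\<And>w. lo \<le> w \<Longrightarrow> w < hi \<Longrightarrow> (w < x \<longleftrightarrow> w < y)"
  shows "x = y"
proof (rule ccontr)
  assume "x \<noteq> y"
  then consider "x < y" | "y < x" by linarith
  then show False
  proof cases
    case 1 then show False using assms(5)[of x] assms by simp
  next
    case 2 then show False using assms(5)[of y] assms by simp
  qed
qed

lemma nat_eq_by_le: assumes "(\<And>i. 1 \<le> i \<Longrightarrow> (i \<le> (a::nat) \<longleftrightarrow> i \<le> b))" shows "a = b"
proof (rule ccontr)
  assume ne: "a \<noteq> b"
  then have "1 \<le> max a b" by auto
  from assms[OF this] ne show False by (cases "a \<le> b") auto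
qed

lemma cnt_val: assumes f: "sdec f" and i: "1 \<le> i" shows "cnt f (f i) = i - 1" "cnt f (f i - 1) = i"
proof -
  show "cnt f (f i) = i - 1"
  proof (rule nat_eq_by_le)
    fix j :: nat assume j: "1 \<le> j"
    show "j \<le> cnt f (f i) \<longleftrightarrow> j \<le> i - 1"
      using cnt_iff[OF f j, of "f i"] sdec_le_iff[OF f j i] by linarith
  qed
  show "cnt f (f i - 1) = i"
  proof (rule nat_eq_by_le)
    fix j :: nat assume j: "1 \<le> j"
    show "j \<le> cnt f (f i - 1) \<longleftrightarrow> j \<le> i"
      using cnt_iff[OF f j, of "f i - 1"] sdec_le_iff[OF f i j] by linarith
  qed
qed

lemma cnt_image: assumes f: "sdec f" shows "cnt f w = card {y \<in> f ` {1..}. w < y}"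
proof -
  have "{y \<in> f ` {1..}. w < y} = f ` {i. 1 \<le> i \<and> w < f i}" by auto
  moreover have "inj_on f {i. 1 \<le> i \<and> w < f i}"
    using sdec_inj[OF f] by (auto simp: inj_on_def)
  ultimately show ?thesis by (simp add: cnt_def card_image)
qed

lemma cnt_charge:
  assumes N: "\<forall>i>N. P i = 0" and w: "w \<le> t - int N"
  shows "cnt (bvf t P) w = nat (t - w)"
proof -
  have iff: "w < bvf t P i \<longleftrightarrow> i \<le> nat (t - w)" if "1 \<le> i" for i
  proof (cases "i \<le> N")
    case True
    then show ?thesis using w unfolding bvf_def by auto
  next
    case False
    then show ?thesis using N w unfolding bvf_def by auto
  qed
  have fin: "{i. 1 \<le> i \<and> w < bvf t P i} = {1..nat (t - w)}"
    using iff by auto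
  then show ?thesis by (simp add: cnt_def)
qed

definition diagF :: "(nat \<Rightarrow> nat) \<Rightarrow> (nat \<times> nat) set" where
  "diagF P = {(i, j). 1 \<le> i \<and> 1 \<le> j \<and> j \<le> P i}"

lemma L2:
  assumes P: "sdec fP" and N: "sdec fN"
    and rel: "\<And>w. cnt fP w = cnt fN w + (if p \<le> w \<and> w < q then 1 else 0)"
    and pq: "p < q"
  defines "b \<equiv> cnt fP q + 1" and "c \<equiv> cnt fN p + 1"
  shows "fP b = q" "fN c = p" "b \<le> c"
    "\<And>i. 1 \<le> i \<Longrightarrow> i < b \<or> c < i \<Longrightarrow> fP i = fN i"
    "\<And>i. b < i \<Longrightarrow> i \<le> c \<Longrightarrow> fP i = fN (i - 1)"
    "cnt fN (q - 1) = cnt fN q" "cnt fP (p - 1) = cnt fP p"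
proof -
  have a1: "cnt fP q = cnt fN q" using rel[of q] by simp
  have a2: "cnt fP (q - 1) = cnt fN (q - 1) + 1" using rel[of "q - 1"] pq by simp
  have a3: "cnt fN q \<le> cnt fN (q - 1)" by (rule cnt_mono[OF N]) simp
  have a4: "cnt fP (q - 1) \<le> cnt fP q + 1" by (rule cnt_step[OF P])
  have bq1: "cnt fP (q - 1) = b" and nq: "cnt fN (q - 1) = cnt fN q" using a1 a2 a3 a4 b_def by auto
  then show "cnt fN (q - 1) = cnt fN q" by simp
  show fb: "fP b = q"
    using cnt_iff[OF P, of b "q - 1"] cnt_iff[OF P, of b q] bq1 b_def by auto
  have c1: "cnt fP p = c" using rel[of p] pq c_def by simp
  have c2: "cnt fP (p - 1) = cnt fN (p - 1)" using rel[of "p - 1"] by simp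
  have c3: "cnt fN (p - 1) \<le> cnt fN p + 1" by (rule cnt_step[OF N])
  have c4: "cnt fP p \<le> cnt fP (p - 1)" by (rule cnt_mono[OF P]) simp
  have cp1: "cnt fN (p - 1) = c" "cnt fP (p - 1) = c" using c1 c2 c3 c4 c_def by auto
  then show "cnt fP (p - 1) = cnt fP p" using c1 by simp
  show fc: "fN c = p"
    using cnt_iff[OF N, of c "p - 1"] cnt_iff[OF N, of c p] cp1 c_def by auto
  have "cnt fN q \<le> cnt fN p" by (rule cnt_mono[OF N]) (use pq in simp)
  then show "b \<le> c" using a1 b_def c_def by simp
  show "fP i = fN i" if i: "1 \<le> i" "i < b \<or> c < i" for i
    using i(2)
  proof
    assume ib: "i < b"
    have x: "q < fP i" using cnt_iff[OF P i(1), of q] ib b_def by simp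
    have y: "q < fN i" using cnt_iff[OF N i(1), of q] ib b_def a1 by simp
    show ?thesis
    proof (rule eq_thresh[of q _ _ "max (fP i) (fN i)"])
      fix w assume "q \<le> w" "w < max (fP i) (fN i)"
      then have "cnt fP w = cnt fN w" using rel[of w] by simp
      then show "w < fP i \<longleftrightarrow> w < fN i" using cnt_iff[OF P i(1), of w] cnt_iff[OF N i(1), of w] by simp
    qed (use x y in auto)
  next
    assume ic: "c < i"
    have x: "fP i \<le> p - 1" using cnt_iff[OF P i(1), of "p - 1"] ic cp1 by simp
    have y: "fN i \<le> p - 1" using cnt_iff[OF N i(1), of "p - 1"] ic cp1 by simp
    show ?thesis
    proof (rule eq_thresh[of "min (fP i) (fN i)" _ _ p])
      fix w assume "min (fP i) (fN i) \<le> w" "w < p"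
      then have "cnt fP w = cnt fN w" using rel[of w] by simp
      then show "w < fP i \<longleftrightarrow> w < fN i" using cnt_iff[OF P i(1), of w] cnt_iff[OF N i(1), of w] by simp
    qed (use x y in auto)
  qed
  show "fP i = fN (i - 1)" if i: "b < i" "i \<le> c" for i
  proof -
    have i1: "1 \<le> i" "1 \<le> i - 1" using i b_def by auto
    have x1: "p < fP i" using cnt_iff[OF P i1(1), of p] i c1 by simp
    have x2: "fP i \<le> q - 1" using cnt_iff[OF P i1(1), of "q - 1"] i bq1 by simp
    have y1: "p < fN (i - 1)" using cnt_iff[OF N i1(2), of p] i c_def by simp
    have "\<not> (i - 1 \<le> cnt fN q)" using i b_def a1 by simp
    then have y2: "fN (i - 1) \<le> q" using cnt_iff[OF N i1(2), of q] by simp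
    show ?thesis
    proof (rule eq_thresh[of p _ _ q])
      fix w assume w: "p \<le> w" "w < q"
      then have "cnt fP w = cnt fN w + 1" using rel[of w] by simp
      then show "w < fP i \<longleftrightarrow> w < fN (i - 1)"
        using cnt_iff[OF P i1(1), of w] cnt_iff[OF N i1(2), of w] i1 by auto
    qed (use x1 x2 y1 y2 in auto)
  qed
qed

lemma TEL:
  fixes fP fN :: "nat \<Rightarrow> int"
  assumes "fP b = q" "fN c = p" "1 \<le> b" "b \<le> c"
    "\<And>i. 1 \<le> i \<Longrightarrow> i < b \<or> c < i \<Longrightarrow> fP i = fN i"
    "\<And>i. b < i \<Longrightarrow> i \<le> c \<Longrightarrow> fP i = fN (i - 1)"
  shows "(\<Sum>i=1..k. fP i - fN i) = (if k < b then 0 else if k \<le> c then q - fN k else q - p)"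
proof (induction k)
  case 0 then show ?case using assms by simp
next
  case (Suc k)
  have s: "(\<Sum>i=1..Suc k. fP i - fN i) = (\<Sum>i=1..k. fP i - fN i) + (fP (Suc k) - fN (Suc k))"
    by simp
  consider "Suc k < b" | "Suc k = b" | "b < Suc k \<and> Suc k \<le> c" | "c < Suc k" by linarith
  then show ?case
  proof cases
    case 1 then show ?thesis using s Suc assms(5)[of "Suc k"] by simp
  next
    case 2 then show ?thesis using s Suc assms by auto
  next
    case 3 then show ?thesis using s Suc assms(6)[of "Suc k"] by auto
  next
    case 4
    then show ?thesis using s Suc assms(5)[of "Suc k"] assms(2) assms(4) by (cases "k = c") auto
  qed
qed

lemma L2diag:
  assumes P: "sdec (bvf t P)" and N: "sdec (bvf t Nn)"
    and rel: "\<And>w. cnt (bvf t P) w = cnt (bvf t Nn) w + (if p \<le> w \<and> w < q then 1 else 0)"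
    and pq: "p < q"
  defines "b \<equiv> cnt (bvf t P) q + 1" and "c \<equiv> cnt (bvf t Nn) p + 1"
  shows "\<And>i. 1 \<le> i \<Longrightarrow> Nn i \<le> P i"
    "ribbon_tail (diagF P - diagF Nn) = (b, P b)"
    "ribbon_head (diagF P - diagF Nn) = (c, Nn c + 1)"
    "int (card (diagF P - diagF Nn)) = q - p"
    "tail_row (diagF P - diagF Nn) = b" "head_row (diagF P - diagF Nn) = c"
proof -
  let ?fP = "bvf t P" and ?fN = "bvf t Nn" and ?S = "diagF P - diagF Nn"
  note L = L2[OF P N rel pq, folded b_def c_def]
  have b1: "1 \<le> b" using b_def by simp
  have fNb: "?fN b < q"
  proof -
    have "\<not> q < ?fN b" using cnt_iff[OF N b1, of q] L(1) rel[of q] b_def by simp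
    moreover have "?fN b \<noteq> q"
    proof
      assume "?fN b = q"
      then have "cnt ?fN (q - 1) = b" using cnt_val(2)[OF N b1] by simp
      then show False using L(6) rel[of q] b_def by simp
    qed
    ultimately show ?thesis by simp
  qed
  have strict: "Nn i < P i" if "b \<le> i" "i \<le> c" for i
  proof (cases "i = b")
    case True then show ?thesis using fNb L(1) unfolding bvf_def by simp
  next
    case False
    then have "?fP i = ?fN (i - 1)" using L(5) that by simp
    moreover have "?fN i < ?fN (i - 1)" using N that b1 False unfolding sdec_def by auto
    ultimately show ?thesis unfolding bvf_def by simp
  qed
  have eqo: "P i = Nn i" if "1 \<le> i" "i < b \<or> c < i" for i
    using L(4)[OF that] unfolding bvf_def by simp
  show le: "Nn i \<le> P i" if "1 \<le> i" for i
    by (cases "b \<le> i \<and> i \<le> c") (use strict[of i] eqo[OF that] in auto)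
  have memS: "(i, j) \<in> ?S \<longleftrightarrow> 1 \<le> i \<and> 1 \<le> j \<and> Nn i < j \<and> j \<le> P i" for i j
    unfolding diagF_def by auto
  have rows: "b \<le> i \<and> i \<le> c" if "(i, j) \<in> ?S" for i j
  proof (rule ccontr)
    assume "\<not> (b \<le> i \<and> i \<le> c)"
    then have "i < b \<or> c < i" by auto
    moreover have "1 \<le> i" "Nn i < P i" using that unfolding memS by auto
    ultimately show False using eqo by fastforce
  qed
  have contS_up: "content (i, j) \<le> content (b, P b) \<and> (content (i, j) = content (b, P b) \<longrightarrow> (i, j) = (b, P b))"
    if "(i, j) \<in> ?S" for i j
  proof -
    have r: "b \<le> i" "i \<le> c" using rows[OF that] by auto
    have j: "j \<le> P i" using that memS by auto
    show ?thesis
    proof (cases "i = b")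
      case True then show ?thesis using j by (simp add: content_def)
    next
      case False
      then have "?fP i < ?fP b" using P r b1 unfolding sdec_def by auto
      then show ?thesis using j by (simp add: content_def bvf_def)
    qed
  qed
  have contS_lo: "content (c, Nn c + 1) \<le> content (i, j) \<and> (content (i, j) = content (c, Nn c + 1) \<longrightarrow> (i, j) = (c, Nn c + 1))"
    if "(i, j) \<in> ?S" for i j
  proof -
    have r: "b \<le> i" "i \<le> c" using rows[OF that] by auto
    have j: "Nn i < j" using that memS by auto
    show ?thesis
    proof (cases "i = c")
      case True then show ?thesis using j by (simp add: content_def)
    next
      case False
      then have "?fN c < ?fN i" using N r b1 unfolding sdec_def by auto
      then show ?thesis using j by (simp add: content_def bvf_def)
    qed
  qed
  have tailin: "(b, P b) \<in> ?S" using strict[of b] L(3) b1 memS by auto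
  have headin: "(c, Nn c + 1) \<in> ?S" using strict[of c] L(3) b1 memS by auto
  show tl: "ribbon_tail ?S = (b, P b)"
    unfolding ribbon_tail_def
  proof (rule the_equality)
    show "(b, P b) \<in> ?S \<and> (\<forall>x\<in>?S. content x \<le> content (b, P b))"
      using tailin contS_up by auto
  next
    fix a assume a: "a \<in> ?S \<and> (\<forall>x\<in>?S. content x \<le> content a)"
    obtain i j where ij: "a = (i, j)" by (cases a)
    have "content (b, P b) \<le> content a" using a tailin by blast
    then show "a = (b, P b)" using a contS_up[of i j] ij by force
  qed
  show hd: "ribbon_head ?S = (c, Nn c + 1)"
    unfolding ribbon_head_def
  proof (rule the_equality)
    show "(c, Nn c + 1) \<in> ?S \<and> (\<forall>x\<in>?S. content (c, Nn c + 1) \<le> content x)"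
      using headin contS_lo by auto
  next
    fix a assume a: "a \<in> ?S \<and> (\<forall>x\<in>?S. content a \<le> content x)"
    obtain i j where ij: "a = (i, j)" by (cases a)
    have "content a \<le> content (c, Nn c + 1)" using a headin by blast
    then show "a = (c, Nn c + 1)" using a contS_lo[of i j] ij by force
  qed
  show "tail_row ?S = b" using tl by (simp add: tail_row_def)
  show "head_row ?S = c" using hd by (simp add: head_row_def)
  have Seq: "?S = Sigma {1..c} (\<lambda>i. {Suc (Nn i)..P i})"
  proof (rule set_eqI)
    fix a :: "nat \<times> nat"
    obtain i j where a: "a = (i, j)" by (cases a)
    show "a \<in> ?S \<longleftrightarrow> a \<in> Sigma {1..c} (\<lambda>i. {Suc (Nn i)..P i})"
      unfolding a using rows[of i j] memS[of i j] by auto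
  qed
  have "card ?S = (\<Sum>i\<in>{1..c}. card {Suc (Nn i)..P i})"
    unfolding Seq by (rule card_SigmaI) auto
  then have "int (card ?S) = (\<Sum>i=1..c. int (P i - Nn i))" by simp
  also have "\<dots> = (\<Sum>i=1..c. ?fP i - ?fN i)"
    by (rule sum.cong) (use le in \<open>auto simp: bvf_def\<close>)
  also have "\<dots> = q - p"
    using TEL[of ?fP b q ?fN c p c] L b1 by simp
  finally show "int (card ?S) = q - p" .
qed

lemma sdec_min: "sdec f \<Longrightarrow> sdec g \<Longrightarrow> sdec (\<lambda>i. min (f i) (g i))"
  unfolding sdec_def min_less_iff_conj min_less_iff_disj by blast

lemma cnt_min: assumes f: "sdec f" and g: "sdec g"
  shows "cnt (\<lambda>i. min (f i) (g i)) w = min (cnt f w) (cnt g w)"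
proof (rule nat_eq_by_le)
  fix i :: nat assume i: "1 \<le> i"
  show "i \<le> cnt (\<lambda>i. min (f i) (g i)) w \<longleftrightarrow> i \<le> min (cnt f w) (cnt g w)"
    using cnt_iff[OF sdec_min[OF f g] i, of w] cnt_iff[OF f i, of w] cnt_iff[OF g i, of w] by auto
qed

lemma bvf_min: "bvf t (\<lambda>i. min (P i) (Q i)) = (\<lambda>i. min (bvf t P i) (bvf t Q i))"
  by (rule ext) (auto simp: bvf_def min_def)

lemma pfun_min: assumes "pfun P" "pfun Q" shows "pfun (\<lambda>i. min (P i) (Q i))"
proof -
  obtain N1 N2 where "\<forall>i>N1. P i = 0" "\<forall>i>N2. Q i = 0" using assms unfolding pfun_def by blast
  then have "\<forall>i>N1. min (P i) (Q i) = 0" by simp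
  moreover have "\<forall>i j. 1 \<le> i \<longrightarrow> i \<le> j \<longrightarrow> min (P j) (Q j) \<le> min (P i) (Q i)"
    using assms unfolding pfun_def min.bounded_iff min_le_iff_disj by blast
  ultimately show ?thesis unfolding pfun_def by blast
qed

lemma diag_inter: "diagF P \<inter> diagF Q = diagF (\<lambda>i. min (P i) (Q i))"
  unfolding diagF_def by auto

lemma diagram_diagF: "diagram la = diagF (part la)"
  unfolding diagram_def diagF_def by simp

lemma part_zero: "length la < i \<Longrightarrow> part la i = 0"
  unfolding part_def by auto

lemma pfun_part: assumes "is_partition la" shows "pfun (part la)"
  unfolding pfun_def
proof (intro conjI allI impI)
  fix i j :: nat assume ij: "1 \<le> i" "i \<le> j"
  show "part la j \<le> part la i"
  proof (cases "j \<le> length la")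
    case True
    then have "la ! (j - 1) \<le> la ! (i - 1)"
    proof (cases "i = j")
      case False
      then have "i - 1 < j - 1" "j - 1 < length la" using ij True by auto
      then show ?thesis using assms sorted_wrt_nth_less[of "(\<ge>)" la "i - 1" "j - 1"] unfolding is_partition_def by simp
    qed simp
    then show ?thesis using True ij by (simp add: part_def)
  next
    case False then show ?thesis by (simp add: part_def)
  qed
next
  show "\<exists>N. \<forall>i>N. part la i = 0" using part_zero by blast
qed

lemma length_le_psize: "is_partition la \<Longrightarrow> length la \<le> psize la"
proof -
  assume "is_partition la"
  then have "\<forall>x\<in>set la. 1 \<le> x" unfolding is_partition_def by auto
  then show ?thesis unfolding psize_def
    by (induction la) auto
qed

lemma psize_sum: assumes "length la \<le> K" shows "int (psize la) = (\<Sum>i=1..K. int (part la i))"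
proof -
  have "psize la = (\<Sum>i<length la. la ! i)" unfolding psize_def by (simp add: sum_list_sum_nth atLeast0LessThan)
  also have "\<dots> = (\<Sum>i=1..length la. part la i)"
    by (rule sum.reindex_bij_witness[of _ "\<lambda>i. i - 1" "\<lambda>i. i + 1"]) (auto simp: part_def)
  also have "\<dots> = (\<Sum>i=1..K. part la i)"
    by (rule sum.mono_neutral_left) (use assms in \<open>auto simp: part_def\<close>)
  finally show ?thesis by simp
qed

lemma L1:
  assumes P: "pfun P" and Q: "pfun Q" and rib: "ribbon (diagF P - diagF Q)" and fin: "finite (diagF P - diagF Q)"
  shows "ribbon_head (diagF P - diagF Q) \<in> diagF P - diagF Q" "ribbon_tail (diagF P - diagF Q) \<in> diagF P - diagF Q"
proof -
  let ?S = "diagF P - diagF Q"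
  have memS: "(i, j) \<in> ?S \<longleftrightarrow> 1 \<le> i \<and> 1 \<le> j \<and> Q i < j \<and> j \<le> P i" for i j
    unfolding diagF_def by auto
  have Pd: "P j \<le> P i" "Q j \<le> Q i" if "1 \<le> i" "i \<le> j" for i j using P Q that unfolding pfun_def by auto
  have inj: "a = a'" if "a \<in> ?S" "a' \<in> ?S" "content a = content a'" for a a'
  proof (rule ccontr)
    assume ne: "a \<noteq> a'"
    obtain i j i' j' where a: "a = (i, j)" "a' = (i', j')" by (cases a, cases a')
    have key: False if "(i, j) \<in> ?S" "(i', j') \<in> ?S" "i < i'" "int j' - int i' = int j - int i" for i j i' j'
    proof -
      have h: "1 \<le> i" "1 \<le> j" "Q i < j" "j \<le> P i" "j' \<le> P i'" using that memS by auto
      have "j < j'" using that by linarith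
      have p1: "P i' \<le> P (i + 1)" "Q (i + 1) \<le> Q i" using Pd[of "i + 1" i'] Pd[of i "i + 1"] h that by auto
      have "(i, j) \<in> ?S \<and> (i + 1, j) \<in> ?S \<and> (i, j + 1) \<in> ?S \<and> (i + 1, j + 1) \<in> ?S"
        using h p1 \<open>j < j'\<close> Pd[of i "i+1"] Pd[of i i'] that unfolding memS by auto
      then show False using rib unfolding ribbon_def no_square_def by blast
    qed
    have "i \<noteq> i'" using ne a that(3) by (auto simp: content_def)
    then have "i < i' \<or> i' < i" by arith
    moreover have m: "(i, j) \<in> ?S" "(i', j') \<in> ?S" using that a by auto
    moreover have "int j' - int i' = int j - int i" using that(3) a by (simp add: content_def)
    ultimately show False using key[OF m(1) m(2)] key[OF m(2) m(1)] by auto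
  qed
  have ne: "?S \<noteq> {}" using rib unfolding ribbon_def by simp
  define mn where "mn = Min (content ` ?S)"
  define mx where "mx = Max (content ` ?S)"
  have "mn \<in> content ` ?S" "mx \<in> content ` ?S" using fin ne unfolding mn_def mx_def by auto
  then obtain a1 a2 where a1: "a1 \<in> ?S" "content a1 = mn" and a2: "a2 \<in> ?S" "content a2 = mx" by blast
  have "\<forall>b\<in>?S. content a1 \<le> content b" using a1 fin unfolding mn_def by simp
  then have "ribbon_head ?S = a1" unfolding ribbon_head_def
  proof (intro the_equality)
    fix a assume "a \<in> ?S \<and> (\<forall>b\<in>?S. content a \<le> content b)"
    then show "a = a1" using inj[of a a1] a1 \<open>\<forall>b\<in>?S. content a1 \<le> content b\<close> by force
  qed (use a1 in auto)
  then show "ribbon_head ?S \<in> ?S" using a1 by simp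
  have "\<forall>b\<in>?S. content b \<le> content a2" using a2 fin unfolding mx_def by simp
  then have "ribbon_tail ?S = a2" unfolding ribbon_tail_def
  proof (intro the_equality)
    fix a assume "a \<in> ?S \<and> (\<forall>b\<in>?S. content b \<le> content a)"
    then show "a = a2" using inj[of a a2] a2 \<open>\<forall>b\<in>?S. content b \<le> content a2\<close> by force
  qed (use a2 in auto)
  then show "ribbon_tail ?S \<in> ?S" using a2 by simp
qed

lemma kdec:
  assumes n: "1 \<le> n" and l: "1 \<le> l"
  shows "k = c_of n l k + int n * (int (d_of n l k) - 1) + int n * int l * m_of n l k"
    "1 \<le> c_of n l k" "c_of n l k \<le> int n" "1 \<le> d_of n l k" "d_of n l k \<le> l"
proof -
  define M where "M = int n * int l"
  have M: "0 < M" using n l by (simp add: M_def)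
  define R where "R = (k - 1) mod M"
  have R: "0 \<le> R" "R < M" using M by (simp_all add: R_def)
  have k1: "k - 1 = M * m_of n l k + R" unfolding R_def m_of_def M_def by simp
  have R2: "R = int n * (R div int n) + R mod int n" by simp
  have "0 \<le> R div int n" using R n by (simp add: pos_imp_zdiv_nonneg_iff)
  then have dq: "int (d_of n l k) - 1 = R div int n" unfolding d_of_def R_def M_def
    by (simp add: R_def M_def)
  have cq: "c_of n l k = R mod int n + 1" unfolding c_of_def R_def M_def by simp
  show "k = c_of n l k + int n * (int (d_of n l k) - 1) + int n * int l * m_of n l k"
    using k1 R2 dq cq unfolding M_def by (simp add: algebra_simps)
  have "R mod int n < int n" "0 \<le> R mod int n" using n by simp_all
  then show "1 \<le> c_of n l k" "c_of n l k \<le> int n" using cq by simp_all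
  show "1 \<le> d_of n l k" unfolding d_of_def by simp
  have "R div int n * int n \<le> R" using n by (metis add_le_cancel_left add.right_neutral div_mult_mod_eq pos_mod_sign of_nat_0_less_iff less_le_trans zero_less_one le_simps(2)[symmetric] Suc_le_eq)
  then have "R div int n * int n < int l * int n" using R unfolding M_def by (simp add: mult.commute)
  then have "R div int n < int l" by (rule mult_right_less_imp_less) simp
  then show "d_of n l k \<le> l" using dq by linarith
qed

lemma phi_eq: "phi n l k = c_of n l k + int n * m_of n l k" by (simp add: phi_def)

lemma phi_mono:
  assumes n: "1 \<le> n" and l: "1 \<le> l" and d: "d_of n l k1 = d_of n l k2" and lt: "k1 < k2"
  shows "phi n l k1 < phi n l k2"
proof -
  note A = kdec[OF n l, of k1] and B = kdec[OF n l, of k2]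
  define c1 c2 m1 m2 where "c1 = c_of n l k1" "c2 = c_of n l k2" "m1 = m_of n l k1" "m2 = m_of n l k2"
  define N where "N = int n * (int (d_of n l k1) - 1)"
  have e1: "k1 = c1 + N + int n * int l * m1" using A(1) unfolding c1_c2_m1_m2_def N_def by simp
  have e2: "k2 = c2 + N + int n * int l * m2" using B(1) d unfolding c1_c2_m1_m2_def N_def by simp
  have cb: "1 \<le> c1" "c1 \<le> int n" "1 \<le> c2" "c2 \<le> int n" using A B unfolding c1_c2_m1_m2_def by auto
  have nl: "int n \<le> int n * int l" using n l by simp
  consider "m1 = m2" | "m1 < m2" | "m2 < m1" by linarith
  then show ?thesis
  proof cases
    case 1 then show ?thesis using e1 e2 lt unfolding phi_def c1_c2_m1_m2_def[symmetric] by simp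
  next
    case 2
    then have "int n * (m1 + 1) \<le> int n * m2" using n by (simp add: mult_left_mono)
    then show ?thesis using cb unfolding phi_def c1_c2_m1_m2_def[symmetric] by (simp add: algebra_simps)
  next
    case 3
    then have "int n * int l * (m2 + 1) \<le> int n * int l * m1" using n l by (simp add: mult_left_mono)
    then have "int n * int l * m2 + int n * int l \<le> int n * int l * m1" by (simp add: algebra_simps)
    moreover have "c2 \<le> int n * int l" using cb nl by linarith
    ultimately have False using e1 e2 lt cb by linarith
    then show ?thesis ..
  qed
qed

lemma phi_mono_iff:
  assumes n: "1 \<le> n" and l: "1 \<le> l" and d: "d_of n l k1 = d_of n l k2"
  shows "phi n l k1 < phi n l k2 \<longleftrightarrow> k1 < k2"
  using phi_mono[OF n l d] phi_mono[OF n l d[symmetric]] by (metis less_asym linorder_neqE)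

lemma phi_inj_runner:
  assumes n: "1 \<le> n" and l: "1 \<le> l"
  shows "inj_on (phi n l) {k. d_of n l k = b}"
  unfolding inj_on_def using phi_mono[OF n l] by (metis (mono_tags) mem_Collect_eq linorder_neqE less_irrefl)

lemma CONV:
  assumes f: "sdec f" and g: "sdec g" and A: "finite A" and B: "finite B"
    and eq: "f ` {1..} \<union> A = g ` {1..} \<union> B" and dA: "f ` {1..} \<inter> A = {}" and dB: "g ` {1..} \<inter> B = {}"
  shows "cnt f w + card {a \<in> A. w < a} = cnt g w + card {a \<in> B. w < a}"
proof -
  have finf: "finite {y \<in> f ` {1..}. w < y}"
  proof -
    have "{y \<in> f ` {1..}. w < y} = f ` {i. 1 \<le> i \<and> w < f i}" by auto
    also have "{i. 1 \<le> i \<and> w < f i} = {1..cnt f w}" using cnt_iff[OF f] by auto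
    finally show ?thesis by simp
  qed
  have fing: "finite {y \<in> g ` {1..}. w < y}"
  proof -
    have "{y \<in> g ` {1..}. w < y} = g ` {i. 1 \<le> i \<and> w < g i}" by auto
    also have "{i. 1 \<le> i \<and> w < g i} = {1..cnt g w}" using cnt_iff[OF g] by auto
    finally show ?thesis by simp
  qed
  have "card {y \<in> f ` {1..} \<union> A. w < y} = card ({y \<in> f ` {1..}. w < y} \<union> {a \<in> A. w < a})"
    by (rule arg_cong[where f=card]) auto
  also have "\<dots> = cnt f w + card {a \<in> A. w < a}"
    using finf A dA by (subst card_Un_disjoint) (auto simp: cnt_image[OF f])
  finally have 1: "card {y \<in> f ` {1..} \<union> A. w < y} = cnt f w + card {a \<in> A. w < a}" .
  have "card {y \<in> g ` {1..} \<union> B. w < y} = card ({y \<in> g ` {1..}. w < y} \<union> {a \<in> B. w < a})"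
    by (rule arg_cong[where f=card]) auto
  also have "\<dots> = cnt g w + card {a \<in> B. w < a}"
    using fing B dB by (subst card_Un_disjoint) (auto simp: cnt_image[OF g])
  finally have 2: "card {y \<in> g ` {1..} \<union> B. w < y} = cnt g w + card {a \<in> B. w < a}" .
  show ?thesis by (metis 1 2 eq)
qed


lemma corr_runner:
  assumes c: "corr n l sl La la" and b: "1 \<le> b" "b \<le> l"
  shows "bvf (sl b) (part (La b)) ` {1..} = phi n l ` {k \<in> bvf (total_charge l sl) (part la) ` {1..}. d_of n l k = b}"
proof (rule set_eqI)
  fix w
  have "w \<in> bvf (sl b) (part (La b)) ` {1..} \<longleftrightarrow>
      (w, b) \<in> {(int (part (La b) i) + sl b + 1 - int i, b) | b i. 1 \<le> b \<and> b \<le> l \<and> 1 \<le> i}"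
    using b by (auto simp: bvf_def image_def)
  also have "\<dots> \<longleftrightarrow> (w, b) \<in> {(phi n l k, d_of n l k) | k.
        k \<in> {int (part la i) + total_charge l sl + 1 - int i | i. 1 \<le> i}}"
    using c unfolding corr_def by simp
  also have "\<dots> \<longleftrightarrow> w \<in> phi n l ` {k \<in> bvf (total_charge l sl) (part la) ` {1..}. d_of n l k = b}"
    by (auto simp: bvf_def image_def)
  finally show "w \<in> bvf (sl b) (part (La b)) ` {1..} \<longleftrightarrow> w \<in> phi n l ` {k \<in> bvf (total_charge l sl) (part la) ` {1..}. d_of n l k = b}" .
qed


lemma RUN:
  assumes n: "1 \<le> n" and l: "1 \<le> l" and b: "1 \<le> b" "b \<le> l"
    and cL: "corr n l sl La la" and cM: "corr n l sl Mu mu"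
    and pL: "is_partition (La b)" and pM: "is_partition (Mu b)"
    and eq: "bvf (total_charge l sl) (part la) ` {1..} \<union> A = bvf (total_charge l sl) (part mu) ` {1..} \<union> B"
    and dA: "bvf (total_charge l sl) (part la) ` {1..} \<inter> A = {}"
    and dB: "bvf (total_charge l sl) (part mu) ` {1..} \<inter> B = {}"
    and A: "finite A" and B: "finite B"
  shows "\<And>w. cnt (bvf (sl b) (part (La b))) w + card {a \<in> phi n l ` {k \<in> A. d_of n l k = b}. w < a}
            = cnt (bvf (sl b) (part (Mu b))) w + card {a \<in> phi n l ` {k \<in> B. d_of n l k = b}. w < a}"
    "card {k \<in> A. d_of n l k = b} = card {k \<in> B. d_of n l k = b}"
proof -
  let ?s = "total_charge l sl" and ?R = "{k. d_of n l k = b}"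
  let ?X = "bvf ?s (part la) ` {1..}" and ?Y = "bvf ?s (part mu) ` {1..}"
  have inj: "inj_on (phi n l) ?R" by (rule phi_inj_runner[OF n l])
  have s1: "{k \<in> ?X. d_of n l k = b} = ?X \<inter> ?R" "{k \<in> ?Y. d_of n l k = b} = ?Y \<inter> ?R" by blast+
  have XL: "bvf (sl b) (part (La b)) ` {1..} = phi n l ` (?X \<inter> ?R)"
    using corr_runner[OF cL b] unfolding s1 .
  have YM: "bvf (sl b) (part (Mu b)) ` {1..} = phi n l ` (?Y \<inter> ?R)"
    using corr_runner[OF cM b] unfolding s1 .
  have Aeq: "{k \<in> A. d_of n l k = b} = A \<inter> ?R" and Beq: "{k \<in> B. d_of n l k = b} = B \<inter> ?R" by auto
  have e1: "phi n l ` (?X \<inter> ?R) \<union> phi n l ` (A \<inter> ?R) = phi n l ` (?Y \<inter> ?R) \<union> phi n l ` (B \<inter> ?R)"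
  proof -
    have "(?X \<union> A) \<inter> ?R = (?Y \<union> B) \<inter> ?R" by (simp only: eq)
    then have "(?X \<inter> ?R) \<union> (A \<inter> ?R) = (?Y \<inter> ?R) \<union> (B \<inter> ?R)" by (simp only: Int_Un_distrib2)
    then show ?thesis by (metis image_Un)
  qed
  have d1: "phi n l ` (?X \<inter> ?R) \<inter> phi n l ` (A \<inter> ?R) = {}"
    using inj_on_image_Int[OF inj, of "?X \<inter> ?R" "A \<inter> ?R"] dA by auto
  have d2: "phi n l ` (?Y \<inter> ?R) \<inter> phi n l ` (B \<inter> ?R) = {}"
    using inj_on_image_Int[OF inj, of "?Y \<inter> ?R" "B \<inter> ?R"] dB by auto
  have sL: "sdec (bvf (sl b) (part (La b)))" by (rule sdec_bvf[OF pfun_part[OF pL]])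
  have sM: "sdec (bvf (sl b) (part (Mu b)))" by (rule sdec_bvf[OF pfun_part[OF pM]])
  have C: "cnt (bvf (sl b) (part (La b))) w + card {a \<in> phi n l ` (A \<inter> ?R). w < a}
            = cnt (bvf (sl b) (part (Mu b))) w + card {a \<in> phi n l ` (B \<inter> ?R). w < a}" for w
  proof (rule CONV[OF sL sM])
    show "finite (phi n l ` (A \<inter> ?R))" "finite (phi n l ` (B \<inter> ?R))" using A B by auto
    show "bvf (sl b) (part (La b)) ` {1..} \<union> phi n l ` (A \<inter> ?R) = bvf (sl b) (part (Mu b)) ` {1..} \<union> phi n l ` (B \<inter> ?R)"
      unfolding XL YM by (rule e1)
    show "bvf (sl b) (part (La b)) ` {1..} \<inter> phi n l ` (A \<inter> ?R) = {}" unfolding XL by (rule d1)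
    show "bvf (sl b) (part (Mu b)) ` {1..} \<inter> phi n l ` (B \<inter> ?R) = {}" unfolding YM by (rule d2)
  qed
  then show "\<And>w. cnt (bvf (sl b) (part (La b))) w + card {a \<in> phi n l ` {k \<in> A. d_of n l k = b}. w < a}
            = cnt (bvf (sl b) (part (Mu b))) w + card {a \<in> phi n l ` {k \<in> B. d_of n l k = b}. w < a}"
    unfolding Aeq Beq by simp
  define N where "N = max (length (La b)) (length (Mu b))"
  define E where "E = phi n l ` (A \<inter> ?R) \<union> phi n l ` (B \<inter> ?R)"
  have finE: "finite E" using A B unfolding E_def by simp
  define w where "w = min (sl b - int N) (Min (insert 0 E) - 1)"
  have wE: "w < e" if "e \<in> E" for e
  proof -
    have "Min (insert 0 E) \<le> e" using finE that by simp
    then show ?thesis unfolding w_def by simp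
  qed
  have c1: "cnt (bvf (sl b) (part (La b))) w = nat (sl b - w)"
    by (rule cnt_charge[of N]) (auto simp: w_def N_def part_zero)
  have c2: "cnt (bvf (sl b) (part (Mu b))) w = nat (sl b - w)"
    by (rule cnt_charge[of N]) (auto simp: w_def N_def part_zero)
  have "{a \<in> phi n l ` (A \<inter> ?R). w < a} = phi n l ` (A \<inter> ?R)" using wE unfolding E_def by auto
  moreover have "{a \<in> phi n l ` (B \<inter> ?R). w < a} = phi n l ` (B \<inter> ?R)" using wE unfolding E_def by auto
  ultimately have "card (phi n l ` (A \<inter> ?R)) = card (phi n l ` (B \<inter> ?R))" using C[of w] c1 c2 by simp
  moreover have "card (phi n l ` (A \<inter> ?R)) = card (A \<inter> ?R)" by (rule card_image) (rule inj_on_subset[OF inj], auto)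
  moreover have "card (phi n l ` (B \<inter> ?R)) = card (B \<inter> ?R)" by (rule card_image) (rule inj_on_subset[OF inj], auto)
  ultimately show "card {k \<in> A. d_of n l k = b} = card {k \<in> B. d_of n l k = b}" unfolding Aeq Beq by simp
qed


lemma MINB:
  fixes cP cQ cN :: "int \<Rightarrow> nat" and a a' b b' w :: int
  assumes rel: "cP w + (if w < a then 1 else 0) + (if w < b then 1 else 0) = cQ w + (if w < a' then 1 else 0) + (if w < b' then 1 else 0)"
    and cN: "cN w = min (cP w) (cQ w)"
    and ord: "a < a'" "a' < b" "a < b'" "b' < b"
  shows "cP w = cN w + (if a \<le> w \<and> w < min a' b' then 1 else 0)"
    "cQ w = cN w + (if max a' b' \<le> w \<and> w < b then 1 else 0)"
  using assms by (auto simp: min_def max_def split: if_splits)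

lemma sum_parts_bvf:
  "(\<Sum>i=1..k. int (P i)) - (\<Sum>i=1..k. int (Q i)) = (\<Sum>i=1..k. bvf t P i - bvf t Q i)"
  by (simp add: bvf_def sum_subtractf[symmetric])

lemma IMGEQ:
  assumes f: "sdec f" and g: "sdec g" and eq: "f ` {1..} = g ` {1..}" and i: "1 \<le> i"
  shows "f i = g i"
proof -
  have "f i \<in> g ` {1..}" using eq i by blast
  then obtain j where j: "1 \<le> j" "f i = g j" by auto
  have "cnt f w = cnt g w" for w using cnt_image[OF f, of w] cnt_image[OF g, of w] eq by simp
  then have "i - 1 = j - 1" using cnt_val(1)[OF f i] cnt_val(1)[OF g j(1)] j(2) by simp
  then have "i = j" using i j(1) by simp
  then show ?thesis using j by simp
qed

lemma cnt_le_fun: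
  assumes g: "sdec g" and le: "\<And>i. 1 \<le> i \<Longrightarrow> f i \<le> g i"
  shows "cnt f w \<le> cnt g w"
proof -
  have "{i. 1 \<le> i \<and> w < f i} \<subseteq> {i. 1 \<le> i \<and> w < g i}" using le by force
  moreover have "{i. 1 \<le> i \<and> w < g i} = {1..cnt g w}" using cnt_iff[OF g] by auto
  ultimately show ?thesis unfolding cnt_def by (metis card_mono finite_atLeastAtMost)
qed

lemma diag_sub_part:
  assumes "diagram A \<subseteq> diagram B" "1 \<le> i" shows "part A i \<le> part B i"
proof (cases "part A i = 0")
  case False
  then have "(i, part A i) \<in> diagram A" using assms(2) unfolding diagram_def by auto
  then show ?thesis using assms(1) unfolding diagram_def by auto
qed simp

lemma CHARGEcard:
  assumes P: "pfun P" and Q: "pfun Q" and A: "finite A" and B: "finite B"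
    and eq: "bvf t P ` {1..} \<union> A = bvf t Q ` {1..} \<union> B"
    and dA: "bvf t P ` {1..} \<inter> A = {}" and dB: "bvf t Q ` {1..} \<inter> B = {}"
  shows "card A = card B"
proof -
  obtain N1 N2 where N: "\<forall>i>N1. P i = 0" "\<forall>i>N2. Q i = 0" using P Q unfolding pfun_def by blast
  define E where "E = A \<union> B"
  have finE: "finite E" using A B unfolding E_def by simp
  define w where "w = min (t - int (max N1 N2)) (Min (insert 0 E) - 1)"
  have wE: "w < e" if "e \<in> E" for e
  proof -
    have "Min (insert 0 E) \<le> e" using finE that by simp
    then show ?thesis unfolding w_def by simp
  qed
  have c1: "cnt (bvf t P) w = nat (t - w)"
    by (rule cnt_charge[of N1]) (use N in \<open>auto simp: w_def\<close>)
  have c2: "cnt (bvf t Q) w = nat (t - w)"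
    by (rule cnt_charge[of N2]) (use N in \<open>auto simp: w_def\<close>)
  have C: "cnt (bvf t P) w + card {a \<in> A. w < a} = cnt (bvf t Q) w + card {a \<in> B. w < a}"
    by (rule CONV[OF sdec_bvf[OF P] sdec_bvf[OF Q] A B eq dA dB])
  have "{a \<in> A. w < a} = A" "{a \<in> B. w < a} = B" using wE unfolding E_def by auto
  then show ?thesis using C c1 c2 by simp
qed

lemma POS:
  assumes n: "1 \<le> n" and l: "1 \<le> l" and b: "1 \<le> b" "b \<le> l"
    and cL: "corr n l sl La la" and pla: "is_partition la" and pLb: "is_partition (La b)"
    and k0: "k0 = bvf (total_charge l sl) (part la) j" "1 \<le> j" "j \<le> r" "d_of n l k0 = b"
  shows "cnt (bvf (sl b) (part (La b))) (phi n l k0) + 1 \<le> card {i \<in> {1..r}. d_of n l (bvf (total_charge l sl) (part la) i) = b}"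
proof -
  let ?F = "bvf (total_charge l sl) (part la)" and ?fb = "bvf (sl b) (part (La b))" and ?R = "{k. d_of n l k = b}"
  have sF: "sdec ?F" by (rule sdec_bvf[OF pfun_part[OF pla]])
  have sb: "sdec ?fb" by (rule sdec_bvf[OF pfun_part[OF pLb]])
  have inj: "inj_on (phi n l) ?R" by (rule phi_inj_runner[OF n l])
  have Xb: "?fb ` {1..} = phi n l ` {k \<in> ?F ` {1..}. d_of n l k = b}" by (rule corr_runner[OF cL b])
  have "phi n l k0 \<in> ?fb ` {1..}" unfolding Xb using k0 by auto
  then obtain i0 where i0: "1 \<le> i0" "phi n l k0 = ?fb i0" by auto
  have "cnt ?fb (phi n l k0) + 1 = cnt ?fb (phi n l k0 - 1)"
    using cnt_val[OF sb i0(1)] i0 by simp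
  also have "\<dots> = card {y \<in> ?fb ` {1..}. phi n l k0 - 1 < y}" by (rule cnt_image[OF sb])
  also have "{y \<in> ?fb ` {1..}. phi n l k0 - 1 < y} = phi n l ` {k \<in> ?F ` {1..}. d_of n l k = b \<and> k0 \<le> k}"
  proof -
    have "phi n l k0 - 1 < phi n l k \<longleftrightarrow> k0 \<le> k" if "d_of n l k = b" for k
      using phi_mono_iff[OF n l, of k k0] k0(4) that by auto
    then show ?thesis unfolding Xb by auto
  qed
  also have "card \<dots> = card {k \<in> ?F ` {1..}. d_of n l k = b \<and> k0 \<le> k}"
    by (rule card_image) (rule inj_on_subset[OF inj], auto)
  also have "\<dots> \<le> card (?F ` {i \<in> {1..r}. d_of n l (?F i) = b})"
  proof (rule card_mono)
    show "finite (?F ` {i \<in> {1..r}. d_of n l (?F i) = b})" by simp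
    show "{k \<in> ?F ` {1..}. d_of n l k = b \<and> k0 \<le> k} \<subseteq> ?F ` {i \<in> {1..r}. d_of n l (?F i) = b}"
    proof
      fix k assume "k \<in> {k \<in> ?F ` {1..}. d_of n l k = b \<and> k0 \<le> k}"
      then obtain i where i: "1 \<le> i" "k = ?F i" "d_of n l k = b" "?F j \<le> ?F i" using k0 by auto
      then have "i \<le> j" using sdec_le_iff[OF sF k0(2) i(1)] by simp
      then show "k \<in> ?F ` {i \<in> {1..r}. d_of n l (?F i) = b}" using i k0 by auto
    qed
  qed
  also have "\<dots> \<le> card {i \<in> {1..r}. d_of n l (?F i) = b}" by (rule card_image_le) simp
  finally show ?thesis .
qed




lemma beta_bvf: "1 \<le> i \<Longrightarrow> i \<le> R \<Longrightarrow> beta_vec R t A i = bvf t (part A) i"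
  by (simp add: beta_vec_def bvf_def)

lemma card_two_if: assumes "p \<noteq> q" shows "card {z \<in> {p, q}. (w::int) < z} = (if w < p then 1 else 0) + (if w < q then 1 else 0)"
proof -
  have "{z \<in> {p, q}. w < z} = (if w < p then {p} else {}) \<union> (if w < q then {q} else {})" by auto
  then show ?thesis using assms by (auto simp: card_insert_if)
qed


locale bigab =
  fixes n l r :: nat and sl :: "nat \<Rightarrow> int" and La Mu :: "nat \<Rightarrow> nat list" and la mu :: "nat list"
    and x x' y y' h :: nat
  assumes n: "1 \<le> n" and l: "1 \<le> l"
    and pLa: "\<And>b. is_partition (La b)" and pMu: "\<And>b. is_partition (Mu b)"
    and pla: "is_partition la" and pmu: "is_partition mu"
    and cL: "corr n l sl La la" and cM: "corr n l sl Mu mu"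
    and xr: "x \<in> {1..r}" "y \<in> {1..r}" "x' \<in> {1..r}" "y' \<in> {1..r}"
    and hx: "bvf (total_charge l sl) (part la) x' = bvf (total_charge l sl) (part mu) x + int h"
      "bvf (total_charge l sl) (part la) y' = bvf (total_charge l sl) (part mu) y - int h"
    and Zeq: "bvf (total_charge l sl) (part la) ` ({1..r} - {x', y'}) = bvf (total_charge l sl) (part mu) ` ({1..r} - {x, y})"
    and eqXY: "bvf (total_charge l sl) (part la) ` {1..} \<union> {bvf (total_charge l sl) (part mu) x, bvf (total_charge l sl) (part mu) y}
       = bvf (total_charge l sl) (part mu) ` {1..} \<union> {bvf (total_charge l sl) (part la) x', bvf (total_charge l sl) (part la) y'}"
    and nX: "bvf (total_charge l sl) (part mu) x \<notin> bvf (total_charge l sl) (part la) ` {1..}"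
       "bvf (total_charge l sl) (part mu) y \<notin> bvf (total_charge l sl) (part la) ` {1..}"
    and nY: "bvf (total_charge l sl) (part la) x' \<notin> bvf (total_charge l sl) (part mu) ` {1..}"
       "bvf (total_charge l sl) (part la) y' \<notin> bvf (total_charge l sl) (part mu) ` {1..}"
    and h1: "1 \<le> h"
    and ord: "bvf (total_charge l sl) (part mu) x + int h < bvf (total_charge l sl) (part mu) y - int h"
begin

abbreviation "F \<equiv> bvf (total_charge l sl) (part la)"
abbreviation "G \<equiv> bvf (total_charge l sl) (part mu)"
abbreviation "u \<equiv> G x"
abbreviation "v \<equiv> G y"
abbreviation "dd \<equiv> d_of n l"
abbreviation "ph \<equiv> phi n l"

lemma sF: "sdec F" by (rule sdec_bvf[OF pfun_part[OF pla]])
lemma sG: "sdec G" by (rule sdec_bvf[OF pfun_part[OF pmu]])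
lemma sLa: "sdec (bvf t (part (La b)))" by (rule sdec_bvf[OF pfun_part[OF pLa]])
lemma sMu: "sdec (bvf t (part (Mu b)))" by (rule sdec_bvf[OF pfun_part[OF pMu]])

lemma ords: "u < u + int h" "u + int h < v - int h" "v - int h < v" "u < v" using ord h1 by auto

lemma eqXY': "F ` {1..} \<union> {u, v} = G ` {1..} \<union> {u + int h, v - int h}"
  using eqXY hx by simp
lemma dA: "F ` {1..} \<inter> {u, v} = {}" using nX by auto
lemma dB: "G ` {1..} \<inter> {u + int h, v - int h} = {}" using nY hx by auto

lemma drange: "1 \<le> dd k" "dd k \<le> l" using kdec[OF n l] by auto

lemma runcnt:
  assumes b: "1 \<le> b" "b \<le> l"
  shows "cnt (bvf (sl b) (part (La b))) w + card {a \<in> ph ` {k \<in> {u, v}. dd k = b}. w < a}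
            = cnt (bvf (sl b) (part (Mu b))) w + card {a \<in> ph ` {k \<in> {u + int h, v - int h}. dd k = b}. w < a}"
    "card {k \<in> {u, v}. dd k = b} = card {k \<in> {u + int h, v - int h}. dd k = b}"
   apply (rule RUN(1)[OF n l b cL cM pLa pMu eqXY' dA dB]; simp)
  by (rule RUN(2)[OF n l b cL cM pLa pMu eqXY' dA dB]; simp)

lemma runcard_all: "card {k \<in> {u, v}. dd k = b} = card {k \<in> {u + int h, v - int h}. dd k = b}"
proof (cases "1 \<le> b \<and> b \<le> l")
  case True then show ?thesis using runcnt(2) by auto
next
  case False
  then have e: "{k \<in> {u, v}. dd k = b} = {}" "{k \<in> {u + int h, v - int h}. dd k = b} = {}"
    using drange[of u] drange[of v] drange[of "u + int h"] drange[of "v - int h"] by auto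
  show ?thesis unfolding e by simp
qed

lemma card2: "card {k \<in> {a, b}. P k} = 0 \<longleftrightarrow> (\<not> P a \<and> \<not> P b)"
proof -
  have "finite {k \<in> {a, b}. P k}" by (rule finite_subset[of _ "{a, b}"]) auto
  then show ?thesis by (auto simp: card_eq_0_iff)
qed

lemma dsets: "{dd u, dd v} = {dd (u + int h), dd (v - int h)}"
proof -
  have "dd u \<in> {dd (u + int h), dd (v - int h)}"
  proof -
    have "card {k \<in> {u, v}. dd k = dd u} \<noteq> 0" by (simp only: card2) simp
    then have "card {k \<in> {u + int h, v - int h}. dd k = dd u} \<noteq> 0" unfolding runcard_all[of "dd u"] .
    then show ?thesis by (simp only: card2) auto
  qed
  moreover have "dd v \<in> {dd (u + int h), dd (v - int h)}"
  proof -
    have "card {k \<in> {u, v}. dd k = dd v} \<noteq> 0" by (simp only: card2) simp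
    then have "card {k \<in> {u + int h, v - int h}. dd k = dd v} \<noteq> 0" unfolding runcard_all[of "dd v"] .
    then show ?thesis by (simp only: card2) auto
  qed
  moreover have "dd (u + int h) \<in> {dd u, dd v}"
  proof -
    have "card {k \<in> {u + int h, v - int h}. dd k = dd (u + int h)} \<noteq> 0" by (simp only: card2) simp
    then have "card {k \<in> {u, v}. dd k = dd (u + int h)} \<noteq> 0" unfolding runcard_all[of "dd (u + int h)"] .
    then show ?thesis by (simp only: card2) auto
  qed
  moreover have "dd (v - int h) \<in> {dd u, dd v}"
  proof -
    have "card {k \<in> {u + int h, v - int h}. dd k = dd (v - int h)} \<noteq> 0" by (simp only: card2) simp
    then have "card {k \<in> {u, v}. dd k = dd (v - int h)} \<noteq> 0" unfolding runcard_all[of "dd (v - int h)"] .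
    then show ?thesis by (simp only: card2) auto
  qed
  ultimately show ?thesis by blast
qed

lemma counts: "card {i \<in> {1..r}. dd (F i) = b} = card {i \<in> {1..r}. dd (G i) = b}"
proof -
  let ?R = "{k. dd k = b}" and ?Z = "G ` ({1..r} - {x, y})"
  have injF: "inj_on F {1..r}" using sdec_inj[OF sF] by (auto simp: inj_on_def)
  have injG: "inj_on G {1..r}" using sdec_inj[OF sG] by (auto simp: inj_on_def)
  have cF: "card {i \<in> {1..r}. dd (F i) = b} = card (F ` {1..r} \<inter> ?R)"
  proof -
    have "F ` {i \<in> {1..r}. dd (F i) = b} = F ` {1..r} \<inter> ?R" by auto
    moreover have "card (F ` {i \<in> {1..r}. dd (F i) = b}) = card {i \<in> {1..r}. dd (F i) = b}"
      by (rule card_image) (rule inj_on_subset[OF injF], auto)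
    ultimately show ?thesis by simp
  qed
  have cG: "card {i \<in> {1..r}. dd (G i) = b} = card (G ` {1..r} \<inter> ?R)"
  proof -
    have "G ` {i \<in> {1..r}. dd (G i) = b} = G ` {1..r} \<inter> ?R" by auto
    moreover have "card (G ` {i \<in> {1..r}. dd (G i) = b}) = card {i \<in> {1..r}. dd (G i) = b}"
      by (rule card_image) (rule inj_on_subset[OF injG], auto)
    ultimately show ?thesis by simp
  qed
  have F1: "F ` {1..r} = ?Z \<union> {u + int h, v - int h}"
  proof -
    have e: "{1..r} = ({1..r} - {x', y'}) \<union> {x', y'}" using xr by auto
    have "F ` {1..r} = F ` (({1..r} - {x', y'}) \<union> {x', y'})" by (rule arg_cong[OF e])
    also have "\<dots> = F ` ({1..r} - {x', y'}) \<union> {F x', F y'}" by (simp only: image_Un image_insert image_empty)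
    finally show ?thesis unfolding Zeq hx .
  qed
  have G1: "G ` {1..r} = ?Z \<union> {u, v}"
  proof -
    have e: "{1..r} = ({1..r} - {x, y}) \<union> {x, y}" using xr by auto
    have "G ` {1..r} = G ` (({1..r} - {x, y}) \<union> {x, y})" by (rule arg_cong[OF e])
    also have "\<dots> = G ` ({1..r} - {x, y}) \<union> {G x, G y}" by (simp only: image_Un image_insert image_empty)
    finally show ?thesis .
  qed
  have dF: "?Z \<inter> {u + int h, v - int h} = {}"
  proof -
    have "F ` ({1..r} - {x', y'}) \<inter> F ` {x', y'} = {}"
      using inj_on_image_Int[OF injF, of "{1..r} - {x', y'}" "{x', y'}"] xr by auto
    then have "F x' \<notin> ?Z" "F y' \<notin> ?Z" using Zeq xr by auto
    then show ?thesis using hx by auto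
  qed
  have dG: "?Z \<inter> {u, v} = {}"
    using inj_on_image_Int[OF injG, of "{1..r} - {x, y}" "{x, y}"] xr by auto
  have dF': "(?Z \<inter> ?R) \<inter> ({u + int h, v - int h} \<inter> ?R) = {}" using dF by blast
  have dG': "(?Z \<inter> ?R) \<inter> ({u, v} \<inter> ?R) = {}" using dG by blast
  have "card (F ` {1..r} \<inter> ?R) = card (?Z \<inter> ?R) + card ({u + int h, v - int h} \<inter> ?R)"
    unfolding F1 Int_Un_distrib2 by (rule card_Un_disjoint[OF _ _ dF']) auto
  moreover have "card (G ` {1..r} \<inter> ?R) = card (?Z \<inter> ?R) + card ({u, v} \<inter> ?R)"
    unfolding G1 Int_Un_distrib2 by (rule card_Un_disjoint[OF _ _ dG']) auto
  moreover have "card ({u, v} \<inter> ?R) = card ({u + int h, v - int h} \<inter> ?R)"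
  proof -
    have e: "{u, v} \<inter> ?R = {k \<in> {u, v}. dd k = b}" "{u + int h, v - int h} \<inter> ?R = {k \<in> {u + int h, v - int h}. dd k = b}" by blast+
    show ?thesis unfolding e by (rule runcard_all)
  qed
  ultimately show ?thesis using cF cG by simp
qed


lemma yu: "u \<in> G ` {1..}" "v \<in> G ` {1..}" using xr by auto
lemma xk: "u + int h \<in> F ` {1..}" "v - int h \<in> F ` {1..}"
proof -
  have "F x' \<in> F ` {1..}" "F y' \<in> F ` {1..}" using xr by auto
  then show "u + int h \<in> F ` {1..}" "v - int h \<in> F ` {1..}" using hx by simp_all
qed

lemma runner_img:
  assumes b: "1 \<le> b" "b \<le> l"
  shows "bvf (sl b) (part (La b)) ` {1..} = ph ` (F ` {1..} \<inter> {k. dd k = b})"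
    "bvf (sl b) (part (Mu b)) ` {1..} = ph ` (G ` {1..} \<inter> {k. dd k = b})"
proof -
  have s1: "{k \<in> F ` {1..}. dd k = b} = F ` {1..} \<inter> {k. dd k = b}" "{k \<in> G ` {1..}. dd k = b} = G ` {1..} \<inter> {k. dd k = b}" by blast+
  show "bvf (sl b) (part (La b)) ` {1..} = ph ` (F ` {1..} \<inter> {k. dd k = b})"
    using corr_runner[OF cL b] unfolding s1 .
  show "bvf (sl b) (part (Mu b)) ` {1..} = ph ` (G ` {1..} \<inter> {k. dd k = b})"
    using corr_runner[OF cM b] unfolding s1 .
qed

lemma sameB:
  assumes b: "1 \<le> b" "b \<le> l" and eq: "La b = Mu b"
  shows "dd u \<noteq> b" "dd v \<noteq> b"
proof -
  have inj: "inj_on ph {k. dd k = b}" by (rule phi_inj_runner[OF n l])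
  have "bvf (sl b) (part (La b)) ` {1..} = bvf (sl b) (part (Mu b)) ` {1..}" using eq by simp
  then have "ph ` (F ` {1..} \<inter> {k. dd k = b}) = ph ` (G ` {1..} \<inter> {k. dd k = b})"
    unfolding runner_img[OF b] .
  then have E: "F ` {1..} \<inter> {k. dd k = b} = G ` {1..} \<inter> {k. dd k = b}"
  proof -
    have "F ` {1..} \<inter> {k. dd k = b} \<subseteq> {k. dd k = b}" "G ` {1..} \<inter> {k. dd k = b} \<subseteq> {k. dd k = b}" by blast+
    from inj_on_image_eq_iff[OF inj this] show ?thesis using \<open>ph ` _ = ph ` _\<close> by simp
  qed
  show "dd u \<noteq> b"
  proof
    assume "dd u = b"
    then have "u \<in> G ` {1..} \<inter> {k. dd k = b}" using yu by simp
    then have "u \<in> F ` {1..}" unfolding E[symmetric] by simp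
    then show False using nX by simp
  qed
  show "dd v \<noteq> b"
  proof
    assume "dd v = b"
    then have "v \<in> G ` {1..} \<inter> {k. dd k = b}" using yu by simp
    then have "v \<in> F ` {1..}" unfolding E[symmetric] by simp
    then show False using nX by simp
  qed
qed

lemma diffB:
  assumes b: "1 \<le> b" "b \<le> l" and nu: "dd u \<noteq> b" and nv: "dd v \<noteq> b"
  shows "diagram (La b) = diagram (Mu b)"
proof -
  have "dd (u + int h) \<in> {dd u, dd v}" "dd (v - int h) \<in> {dd u, dd v}" using dsets by blast+
  then have nuh: "dd (u + int h) \<noteq> b" "dd (v - int h) \<noteq> b" using nu nv by (metis insert_iff empty_iff)+
  have E: "F ` {1..} \<inter> {k. dd k = b} = G ` {1..} \<inter> {k. dd k = b}"
  proof -
    have "F ` {1..} \<inter> {k. dd k = b} = (F ` {1..} \<union> {u, v}) \<inter> {k. dd k = b}" using nu nv by auto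
    also have "\<dots> = (G ` {1..} \<union> {u + int h, v - int h}) \<inter> {k. dd k = b}" by (simp only: eqXY')
    also have "\<dots> = G ` {1..} \<inter> {k. dd k = b}" using nuh by auto
    finally show ?thesis .
  qed
  have "bvf (sl b) (part (La b)) ` {1..} = bvf (sl b) (part (Mu b)) ` {1..}"
    using runner_img[OF b] E by simp
  then have "bvf (sl b) (part (La b)) i = bvf (sl b) (part (Mu b)) i" if "1 \<le> i" for i
    using IMGEQ[OF sLa sMu _ that] by blast
  then have "part (La b) i = part (Mu b) i" if "1 \<le> i" for i using that by (simp add: bvf_def)
  then show ?thesis unfolding diagram_def by auto
qed

lemma card_single_if: "card {a \<in> {c}. (w::int) < a} = (if w < c then 1 else 0)"
proof (cases "w < c")
  case True then have "{a \<in> {c}. w < a} = {c}" by auto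
  then show ?thesis using True by simp
next
  case False then have "{a \<in> {c}. w < a} = {}" by auto
  then show ?thesis using False by simp
qed

lemma run1:
  assumes b: "1 \<le> b" "b \<le> l" and p: "{k \<in> {u, v}. dd k = b} = {p0}" and q: "{k \<in> {u + int h, v - int h}. dd k = b} = {q0}"
  shows "cnt (bvf (sl b) (part (La b))) w + (if w < ph p0 then 1 else 0) = cnt (bvf (sl b) (part (Mu b))) w + (if w < ph q0 then 1 else 0)"
  using runcnt(1)[OF b, of w] unfolding p q image_insert image_empty card_single_if .

lemma contain_lt:
  fixes cA cB :: "int \<Rightarrow> nat"
  assumes rel: "\<And>w. cA w + (if w < p then 1 else 0) = cB w + (if w < q then 1 else 0)"
    and le: "\<And>w. cB w \<le> cA w" and ne: "p \<noteq> q"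
  shows "p < q"
  using rel[of q] le[of q] ne by (auto split: if_splits)

lemma cnt_contain:
  assumes sub: "diagram A \<subseteq> diagram B" and B: "is_partition B"
  shows "cnt (bvf t (part A)) w \<le> cnt (bvf t (part B)) w"
  by (rule cnt_le_fun[OF sdec_bvf[OF pfun_part[OF B]]]) (use diag_sub_part[OF sub] in \<open>simp add: bvf_def\<close>)


lemma J1dsets:
  assumes J: "J1 l La Mu d d'"
  shows "{dd u, dd v} = {d, d'}"
proof -
  from J have dd': "d \<noteq> d'" "1 \<le> d" "d \<le> l" "1 \<le> d'" "d' \<le> l"
    and oth: "\<forall>b. 1 \<le> b \<and> b \<le> l \<and> b \<noteq> d \<and> b \<noteq> d' \<longrightarrow> La b = Mu b"
    and r1: "ribbon (diagram (La d) - diagram (Mu d))" and r2: "ribbon (diagram (Mu d') - diagram (La d'))"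
    unfolding J1_def by auto
  have "dd u \<in> {d, d'}"
  proof (rule ccontr)
    assume "dd u \<notin> {d, d'}"
    then have "La (dd u) = Mu (dd u)" using oth drange[of u] by auto
    then show False using sameB(1)[OF drange[of u]] by simp
  qed
  moreover have "dd v \<in> {d, d'}"
  proof (rule ccontr)
    assume "dd v \<notin> {d, d'}"
    then have "La (dd v) = Mu (dd v)" using oth drange[of v] by auto
    then show False using sameB(2)[OF drange[of v]] by simp
  qed
  moreover have "d \<in> {dd u, dd v}"
  proof (rule ccontr)
    assume "d \<notin> {dd u, dd v}"
    then have "diagram (La d) = diagram (Mu d)" using diffB[of d] dd' by auto
    then show False using r1 unfolding ribbon_def by simp
  qed
  moreover have "d' \<in> {dd u, dd v}"
  proof (rule ccontr)
    assume "d' \<notin> {dd u, dd v}"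
    then have "diagram (La d') = diagram (Mu d')" using diffB[of d'] dd' by auto
    then show False using r2 unfolding ribbon_def by simp
  qed
  ultimately show ?thesis by blast
qed


lemma xr1: "1 \<le> x" "x \<le> r" "1 \<le> y" "y \<le> r" using xr by auto

lemma rel_conv:
  fixes cA cB :: "int \<Rightarrow> nat"
  assumes "cA w + (if w < p then 1 else 0) = cB w + (if w < q then 1 else 0)" "p < q"
  shows "cA w = cB w + (if p \<le> w \<and> w < q then 1 else 0)"
  using assms by (auto split: if_splits)

lemma Fpos: assumes "k \<in> {u + int h, v - int h}" obtains j where "k = F j" "1 \<le> j" "j \<le> r"
  using assms xr hx by (metis atLeastAtMost_iff insert_iff empty_iff)

lemma J1main:
  assumes J: "J1 l La Mu d d'" and kk: "{k, k'} = {u + int h, v - int h}" "dd k = d" "dd k' = d'"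
  defines "rb \<equiv> \<lambda>b. card {i \<in> {1..r}. dd (F i) = b}"
  shows "dd u = d" "dd v = d'"
    "beta_vec (rb d) (sl d) (Mu d) (head_row (diagram (La d) - diagram (Mu d))) = ph u"
    "beta_vec (rb d) (sl d) (La d) (tail_row (diagram (La d) - diagram (Mu d))) = ph k"
    "beta_vec (rb d') (sl d') (La d') (head_row (diagram (Mu d') - diagram (La d'))) = ph k'"
    "beta_vec (rb d') (sl d') (Mu d') (tail_row (diagram (Mu d') - diagram (La d'))) = ph v"
    "int (card (diagram (La d) - diagram (Mu d))) = ph k - ph u"
    "ph k - ph u = ph v - ph k'"
proof -
  from J have dd': "d \<noteq> d'" "1 \<le> d" "d \<le> l" "1 \<le> d'" "d' \<le> l"
    and sub1: "diagram (Mu d) \<subseteq> diagram (La d)" and sub2: "diagram (La d') \<subseteq> diagram (Mu d')"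
    and ceq: "card (diagram (La d) - diagram (Mu d)) = card (diagram (Mu d') - diagram (La d'))"
    unfolding J1_def by auto
  have D: "{dd u, dd v} = {d, d'}" by (rule J1dsets[OF J])
  have kin: "k \<in> {u + int h, v - int h}" "k' \<in> {u + int h, v - int h}" using kk(1) by blast+
  have kG: "k \<notin> G ` {1..}" "k' \<notin> G ` {1..}" using kin dB by blast+
  have qd: "{j \<in> {u + int h, v - int h}. dd j = d} = {k}" unfolding kk(1)[symmetric] using kk(2,3) dd'(1) by auto
  have qd': "{j \<in> {u + int h, v - int h}. dd j = d'} = {k'}" unfolding kk(1)[symmetric] using kk(2,3) dd'(1) by auto
  have cLd: "cnt (bvf (sl d) (part (Mu d))) w \<le> cnt (bvf (sl d) (part (La d))) w" for w
    by (rule cnt_contain[OF sub1 pLa])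
  have cMd': "cnt (bvf (sl d') (part (La d'))) w \<le> cnt (bvf (sl d') (part (Mu d'))) w" for w
    by (rule cnt_contain[OF sub2 pMu])
  have ph_ne: "ph a \<noteq> ph c" if "dd a = dd c" "a \<noteq> c" for a c
    using phi_mono_iff[OF n l that(1)] phi_mono_iff[OF n l that(1)[symmetric]] that(2) by (cases "a < c") auto
  have case12: "(dd u = d \<and> dd v = d') \<or> (dd u = d' \<and> dd v = d)" using D dd'(1) by (metis doubleton_eq_iff)
  have not2: "\<not> (dd u = d' \<and> dd v = d)"
  proof
    assume a: "dd u = d' \<and> dd v = d"
    have pd: "{j \<in> {u, v}. dd j = d} = {v}" using a dd'(1) by auto
    have rel: "cnt (bvf (sl d) (part (La d))) w + (if w < ph v then 1 else 0) = cnt (bvf (sl d) (part (Mu d))) w + (if w < ph k then 1 else 0)" for w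
      by (rule run1[OF dd'(2,3) pd qd])
    have "v \<noteq> k" using kG yu by auto
    then have "ph v \<noteq> ph k" using ph_ne a kk(2) by simp
    then have "ph v < ph k" by (rule contain_lt[OF rel cLd])
    then have "v < k" using phi_mono_iff[OF n l, of v k] a kk(2) by simp
    then show False using kin ords by auto
  qed
  then have du: "dd u = d" and dv: "dd v = d'" using case12 by auto
  then show "dd u = d" "dd v = d'" by simp_all
  have pd: "{j \<in> {u, v}. dd j = d} = {u}" using du dv dd'(1) by auto
  have pd': "{j \<in> {u, v}. dd j = d'} = {v}" using du dv dd'(1) by auto
  have rel1: "cnt (bvf (sl d) (part (La d))) w + (if w < ph u then 1 else 0) = cnt (bvf (sl d) (part (Mu d))) w + (if w < ph k then 1 else 0)" for w
    by (rule run1[OF dd'(2,3) pd qd])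
  have "u \<noteq> k" using kG yu by auto
  then have "ph u \<noteq> ph k" using ph_ne du kk(2) by simp
  then have lt1: "ph u < ph k" by (rule contain_lt[OF rel1 cLd])
  have R1: "cnt (bvf (sl d) (part (La d))) w = cnt (bvf (sl d) (part (Mu d))) w + (if ph u \<le> w \<and> w < ph k then 1 else 0)" for w
    using rel1[of w] lt1 by (auto split: if_splits)
  note A1 = L2diag[OF sLa sMu R1 lt1] and B1 = L2[OF sLa sMu R1 lt1]
  have rho: "diagram (La d) - diagram (Mu d) = diagF (part (La d)) - diagF (part (Mu d))" by (simp add: diagram_diagF)
  obtain j where j: "k = F j" "1 \<le> j" "j \<le> r" using Fpos[OF kin(1)] by blast
  have b0: "cnt (bvf (sl d) (part (La d))) (ph k) + 1 \<le> rb d"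
    using POS[OF n l dd'(2,3) cL pla pLa j(1) j(2) j(3)] j kk(2) unfolding rb_def by simp
  have c0: "cnt (bvf (sl d) (part (Mu d))) (ph u) + 1 \<le> rb d"
    using POS[OF n l dd'(2,3) cM pmu pMu refl xr1(1) xr1(2) du] counts unfolding rb_def by simp
  show "beta_vec (rb d) (sl d) (Mu d) (head_row (diagram (La d) - diagram (Mu d))) = ph u"
    unfolding rho A1(6) using beta_bvf[OF _ c0, where t="sl d" and A="Mu d"] B1(2) by simp
  show "beta_vec (rb d) (sl d) (La d) (tail_row (diagram (La d) - diagram (Mu d))) = ph k"
    unfolding rho A1(5) using beta_bvf[OF _ b0, where t="sl d" and A="La d"] B1(1) by simp
  show c1: "int (card (diagram (La d) - diagram (Mu d))) = ph k - ph u"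
    unfolding rho by (rule A1(4))
  have rel2: "cnt (bvf (sl d') (part (Mu d'))) w + (if w < ph k' then 1 else 0) = cnt (bvf (sl d') (part (La d'))) w + (if w < ph v then 1 else 0)" for w
    using run1[OF dd'(4,5) pd' qd', of w] by simp
  have "v \<noteq> k'" using kG yu by auto
  then have "ph k' \<noteq> ph v" using ph_ne dv kk(3) by metis
  then have lt2: "ph k' < ph v" by (rule contain_lt[OF rel2 cMd'])
  have R2: "cnt (bvf (sl d') (part (Mu d'))) w = cnt (bvf (sl d') (part (La d'))) w + (if ph k' \<le> w \<and> w < ph v then 1 else 0)" for w
    using rel2[of w] lt2 by (auto split: if_splits)
  note A2 = L2diag[OF sMu sLa R2 lt2] and B2 = L2[OF sMu sLa R2 lt2]
  have rho': "diagram (Mu d') - diagram (La d') = diagF (part (Mu d')) - diagF (part (La d'))" by (simp add: diagram_diagF)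
  obtain j' where j': "k' = F j'" "1 \<le> j'" "j' \<le> r" using Fpos[OF kin(2)] by blast
  have c0': "cnt (bvf (sl d') (part (La d'))) (ph k') + 1 \<le> rb d'"
    using POS[OF n l dd'(4,5) cL pla pLa j'(1) j'(2) j'(3)] j' kk(3) unfolding rb_def by simp
  have b0': "cnt (bvf (sl d') (part (Mu d'))) (ph v) + 1 \<le> rb d'"
    using POS[OF n l dd'(4,5) cM pmu pMu refl xr1(3) xr1(4) dv] counts unfolding rb_def by simp
  show "beta_vec (rb d') (sl d') (La d') (head_row (diagram (Mu d') - diagram (La d'))) = ph k'"
    unfolding rho' A2(6) using beta_bvf[OF _ c0', where t="sl d'" and A="La d'"] B2(2) by simp
  show "beta_vec (rb d') (sl d') (Mu d') (tail_row (diagram (Mu d') - diagram (La d'))) = ph v"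
    unfolding rho' A2(5) using beta_bvf[OF _ b0', where t="sl d'" and A="Mu d'"] B2(1) by simp
  have "int (card (diagram (Mu d') - diagram (La d'))) = ph v - ph k'"
    unfolding rho' by (rule A2(4))
  then show "ph k - ph u = ph v - ph k'" using c1 ceq by simp
qed


lemma J2main:
  assumes J: "J2 l La Mu d"
  defines "rb \<equiv> \<lambda>b. card {i \<in> {1..r}. dd (F i) = b}"
    and "\<rho> \<equiv> diagram (La d) - (diagram (La d) \<inter> diagram (Mu d))"
    and "\<rho>' \<equiv> diagram (Mu d) - (diagram (La d) \<inter> diagram (Mu d))"
  shows "dd u = d" "dd v = d" "dd (u + int h) = d" "dd (v - int h) = d"
    "dom_lt (La d) (Mu d)"
    "beta_vec (rb d) (sl d) (Mu d) (head_row \<rho>) = ph u"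
    "beta_vec (rb d) (sl d) (La d) (tail_row \<rho>) = ph (u + int h)"
    "beta_vec (rb d) (sl d) (La d) (head_row \<rho>') = ph (v - int h)"
    "beta_vec (rb d) (sl d) (Mu d) (tail_row \<rho>') = ph v"
    "int (card \<rho>) = ph (u + int h) - ph u"
    "ph (u + int h) - ph u = ph v - ph (v - int h)"
proof -
  from J have dr: "1 \<le> d" "d \<le> l"
    and oth: "\<forall>b. 1 \<le> b \<and> b \<le> l \<and> b \<noteq> d \<longrightarrow> La b = Mu b"
    and ceq: "card \<rho> = card \<rho>'"
    unfolding J2_def \<rho>_def \<rho>'_def by auto
  show du: "dd u = d"
  proof (rule ccontr)
    assume "dd u \<noteq> d"
    then have "La (dd u) = Mu (dd u)" using oth drange[of u] by auto
    then show False using sameB(1)[OF drange[of u]] by simp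
  qed
  show dv: "dd v = d"
  proof (rule ccontr)
    assume "dd v \<noteq> d"
    then have "La (dd v) = Mu (dd v)" using oth drange[of v] by auto
    then show False using sameB(2)[OF drange[of v]] by simp
  qed
  have "dd (u + int h) \<in> {dd u, dd v}" "dd (v - int h) \<in> {dd u, dd v}" using dsets by blast+
  then show duh: "dd (u + int h) = d" and dvh: "dd (v - int h) = d" using du dv by simp_all
  define a where "a = ph u"
  define a' where "a' = ph (u + int h)"
  define b' where "b' = ph (v - int h)"
  define bb where "bb = ph v"
  have o1: "a < a'" unfolding a_def a'_def using phi_mono[OF n l _ ords(1)] du duh by simp
  have o2: "a' < b'" unfolding a'_def b'_def using phi_mono[OF n l _ ords(2)] duh dvh by simp
  have o3: "b' < bb" unfolding b'_def bb_def using phi_mono[OF n l _ ords(3)] dvh dv by simp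
  have pd: "{j \<in> {u, v}. dd j = d} = {u, v}" using du dv by auto
  have qd: "{j \<in> {u + int h, v - int h}. dd j = d} = {u + int h, v - int h}" using duh dvh by auto
  let ?fL = "bvf (sl d) (part (La d))" and ?fM = "bvf (sl d) (part (Mu d))"
  define Nd where "Nd = (\<lambda>i. min (part (La d) i) (part (Mu d) i))"
  let ?fN = "bvf (sl d) Nd"
  have sN: "sdec ?fN" unfolding Nd_def by (rule sdec_bvf[OF pfun_min[OF pfun_part[OF pLa] pfun_part[OF pMu]]])
  have cN: "cnt ?fN w = min (cnt ?fL w) (cnt ?fM w)" for w
    unfolding Nd_def bvf_min by (rule cnt_min[OF sLa sMu])
  have rel: "cnt ?fL w + (if w < a then 1 else 0) + (if w < bb then 1 else 0) = cnt ?fM w + (if w < a' then 1 else 0) + (if w < b' then 1 else 0)" for w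
  proof -
    have ne: "ph u \<noteq> ph v" "ph (u + int h) \<noteq> ph (v - int h)" using o1 o2 o3 unfolding a_def a'_def b'_def bb_def by auto
    have R: "cnt ?fL w + card {z \<in> ph ` {u, v}. w < z} = cnt ?fM w + card {z \<in> ph ` {u + int h, v - int h}. w < z}"
      using runcnt(1)[OF dr, of w] unfolding pd qd .
    have e1: "card {z \<in> ph ` {u, v}. w < z} = (if w < a then 1 else 0) + (if w < bb then 1 else 0)"
      using card_two_if[OF ne(1), of w] unfolding a_def bb_def by simp
    have e2: "card {z \<in> ph ` {u + int h, v - int h}. w < z} = (if w < a' then 1 else 0) + (if w < b' then 1 else 0)"
      using card_two_if[OF ne(2), of w] unfolding a'_def b'_def by simp
    show ?thesis using R unfolding e1 e2 by simp
  qed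
  have RL: "cnt ?fL w = cnt ?fN w + (if a \<le> w \<and> w < a' then 1 else 0)" for w
    using MINB(1)[where cP="cnt ?fL" and cQ="cnt ?fM" and cN="cnt ?fN", OF rel[of w] cN[of w] o1 _ _ o3] o1 o2 o3 by (simp add: min_def)
  have RM: "cnt ?fM w = cnt ?fN w + (if b' \<le> w \<and> w < bb then 1 else 0)" for w
    using MINB(2)[where cP="cnt ?fL" and cQ="cnt ?fM" and cN="cnt ?fN", OF rel[of w] cN[of w] o1 _ _ o3] o1 o2 o3 by (simp add: max_def)
  have rho: "\<rho> = diagF (part (La d)) - diagF Nd" unfolding \<rho>_def Nd_def diagram_diagF diag_inter ..
  have rho': "\<rho>' = diagF (part (Mu d)) - diagF Nd" unfolding \<rho>'_def Nd_def diagram_diagF diag_inter ..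
  note AL = L2diag[OF sLa sN RL o1] and BL = L2[OF sLa sN RL o1]
  note AM = L2diag[OF sMu sN RM o3] and BM = L2[OF sMu sN RM o3]
  define b0 where "b0 = cnt ?fL a' + 1"
  define c0 where "c0 = cnt ?fN a + 1"
  define b0' where "b0' = cnt ?fM bb + 1"
  define c0' where "c0' = cnt ?fN b' + 1"
  have c0'v: "cnt ?fN (b' - 1) = c0'" using cnt_val(2)[OF sN, of c0'] BM(2) unfolding c0'_def by simp
  have b0N: "b0 = cnt ?fN a' + 1" unfolding b0_def using RL[of a'] by simp
  have "cnt ?fN (b' - 1) \<le> cnt ?fN a'" by (rule cnt_mono[OF sN]) (use o2 in simp)
  then have ord1: "c0' < b0" using c0'v b0N by simp
  have "cnt ?fN a' \<le> cnt ?fN a" by (rule cnt_mono[OF sN]) (use o1 in simp)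
  then have ord2: "b0 \<le> c0" using b0N c0_def by simp
  have c0M: "c0 = cnt ?fM a + 1" unfolding c0_def using RM[of a] o2 o3 o1 by simp
  have c0'L: "c0' = cnt ?fL b' + 1" unfolding c0'_def using RL[of b'] o2 by simp
  have b0'N: "b0' = cnt ?fN bb + 1" unfolding b0'_def using RM[of bb] by simp
  have xr2: "1 \<le> x'" "x' \<le> r" "1 \<le> y'" "y' \<le> r" using xr by auto
  have Bc0: "c0 \<le> rb d"
    using POS[OF n l dr cM pmu pMu refl xr1(1) xr1(2) du] counts unfolding rb_def c0M a_def by simp
  have Bb0: "b0 \<le> rb d"
    using POS[OF n l dr cL pla pLa refl xr2(1) xr2(2)] duh hx unfolding rb_def b0_def a'_def by simp
  have Bc0': "c0' \<le> rb d"
    using POS[OF n l dr cL pla pLa refl xr2(3) xr2(4)] dvh hx unfolding rb_def c0'L b'_def by simp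
  have Bb0': "b0' \<le> rb d"
    using POS[OF n l dr cM pmu pMu refl xr1(3) xr1(4) dv] counts unfolding rb_def b0'_def bb_def by simp
  have "?fM c0 = ?fN c0" using BM(4)[of c0] ord1 ord2 unfolding c0'_def[symmetric] by simp
  then show "beta_vec (rb d) (sl d) (Mu d) (head_row \<rho>) = ph u"
    unfolding rho AL(6) c0_def[symmetric] using beta_bvf[OF _ Bc0, where t="sl d" and A="Mu d"] BL(2) a_def c0_def by simp
  show "beta_vec (rb d) (sl d) (La d) (tail_row \<rho>) = ph (u + int h)"
    unfolding rho AL(5) b0_def[symmetric] using beta_bvf[OF _ Bb0, where t="sl d" and A="La d"] BL(1) a'_def b0_def by simp
  have "?fL c0' = ?fN c0'" using BL(4)[of c0'] ord1 unfolding b0_def[symmetric] c0'_def by simp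
  then show "beta_vec (rb d) (sl d) (La d) (head_row \<rho>') = ph (v - int h)"
    unfolding rho' AM(6) c0'_def[symmetric] using beta_bvf[OF _ Bc0', where t="sl d" and A="La d"] BM(2) b'_def c0'_def by simp
  show "beta_vec (rb d) (sl d) (Mu d) (tail_row \<rho>') = ph v"
    unfolding rho' AM(5) b0'_def[symmetric] using beta_bvf[OF _ Bb0', where t="sl d" and A="Mu d"] BM(1) bb_def b0'_def by simp
  have cr: "int (card \<rho>) = a' - a" unfolding rho by (rule AL(4))
  have cr': "int (card \<rho>') = bb - b'" unfolding rho' by (rule AM(4))
  show "int (card \<rho>) = ph (u + int h) - ph u" using cr a_def a'_def by simp
  have ab: "a' - a = bb - b'" using cr cr' ceq by simp
  then show "ph (u + int h) - ph u = ph v - ph (v - int h)" unfolding a_def a'_def b'_def bb_def .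
  have TL: "(\<Sum>i=1..k. ?fL i - ?fN i) = (if k < b0 then 0 else if k \<le> c0 then a' - ?fN k else a' - a)" for k
    using TEL[of ?fL b0 a' ?fN c0 a k] BL unfolding b0_def c0_def by simp
  have TM: "(\<Sum>i=1..k. ?fM i - ?fN i) = (if k < b0' then 0 else if k \<le> c0' then bb - ?fN k else bb - b')" for k
    using TEL[of ?fM b0' bb ?fN c0' b' k] BM unfolding b0'_def c0'_def by simp
  have diffk: "(\<Sum>i=1..k. int (part (La d) i)) - (\<Sum>i=1..k. int (part (Mu d) i))
      = (\<Sum>i=1..k. ?fL i - ?fN i) - (\<Sum>i=1..k. ?fM i - ?fN i)" for k
    unfolding sum_parts_bvf[where t="sl d"] sum_subtractf[symmetric] by (rule sum.cong) (auto simp: bvf_def)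
  have domk: "(\<Sum>i=1..k. int (part (La d) i)) \<le> (\<Sum>i=1..k. int (part (Mu d) i))" for k
  proof -
    have mpos: "0 \<le> (\<Sum>i=1..k. ?fM i - ?fN i)"
    proof (cases "k < b0'")
      case False
      then have "?fN k \<le> bb" if "k \<le> c0'"
        using cnt_iff[OF sN, of k bb] b0'N b0'_def that by auto
      then show ?thesis unfolding TM using False o3 by auto
    qed (use TM[of k] in simp)
    show ?thesis
    proof (cases "k < b0")
      case True then show ?thesis using diffk[of k] TL[of k] mpos by simp
    next
      case False
      then have "k > c0'" using ord1 by simp
      then have M: "(\<Sum>i=1..k. ?fM i - ?fN i) = bb - b'" using TM[of k] BM(3) unfolding b0'_def c0'_def by auto
      have "(\<Sum>i=1..k. ?fL i - ?fN i) \<le> a' - a"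
      proof (cases "k \<le> c0")
        case True
        then have "?fN c0 \<le> ?fN k" using sdec_le_iff[OF sN, of c0 k] False b0_def by simp
        then show ?thesis using TL[of k] False True BL(2) c0_def by simp
      qed (use TL[of k] False in simp)
      then show ?thesis using diffk[of k] M ab by simp
    qed
  qed
  define K where "K = max c0 (max (length (La d)) (length (Mu d)))"
  have "(\<Sum>i=1..K. ?fL i - ?fN i) = a' - a" using TL[of K] BL(2) ord2 unfolding K_def c0_def by auto
  moreover have "(\<Sum>i=1..K. ?fM i - ?fN i) = bb - b'" using TM[of K] BM(3) ord1 ord2 unfolding K_def c0'_def b0'_def by auto
  ultimately have "(\<Sum>i=1..K. int (part (La d) i)) = (\<Sum>i=1..K. int (part (Mu d) i))" using diffk[of K] ab by simp
  moreover have "length (La d) \<le> K" "length (Mu d) \<le> K" unfolding K_def by auto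
  ultimately have "int (psize (La d)) = int (psize (Mu d))" using psize_sum[of "La d" K] psize_sum[of "Mu d" K] by simp
  then have ps: "psize (La d) = psize (Mu d)" by simp
  have dle: "dom_le (La d) (Mu d)" unfolding dom_le_def
  proof (intro conjI allI)
    show "psize (La d) = psize (Mu d)" by (rule ps)
    fix k
    have "int (\<Sum>i=1..k. part (La d) i) \<le> int (\<Sum>i=1..k. part (Mu d) i)" using domk[of k] by simp
    then show "(\<Sum>i=1..k. part (La d) i) \<le> (\<Sum>i=1..k. part (Mu d) i)" by linarith
  qed
  have "La d \<noteq> Mu d"
  proof
    assume "La d = Mu d"
    then have "cnt ?fL a = cnt ?fM a" by simp
    then show False using RL[of a] RM[of a] o1 o2 o3 by simp
  qed
  then show "dom_lt (La d) (Mu d)" using dle unfolding dom_lt_def by simp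
qed

end



lemma STEP3:
  assumes pla: "is_partition la" and pmu: "is_partition mu" and dl: "dom_le la mu"
    and rel: "\<And>w. cnt (bvf t (part la)) w + (if w < u then 1 else 0) + (if w < v then 1 else 0)
                 = cnt (bvf t (part mu)) w + (if w < q1 then 1 else 0) + (if w < q2 then 1 else 0)"
    and o: "u < q1" "v < q1" "q2 < q1"
  shows False
proof -
  let ?F = "bvf t (part la)" and ?G = "bvf t (part mu)"
  have sF: "sdec ?F" by (rule sdec_bvf[OF pfun_part[OF pla]])
  have sG: "sdec ?G" by (rule sdec_bvf[OF pfun_part[OF pmu]])
  have hi: "cnt ?F w = cnt ?G w" if "q1 \<le> w" for w using rel[of w] that o by simp
  define k where "k = cnt ?F q1 + 1"
  have k1: "1 \<le> k" unfolding k_def by simp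
  have eq: "?F i = ?G i" if i: "1 \<le> i" "i < k" for i
  proof -
    have x: "q1 < ?F i" using cnt_iff[OF sF i(1), of q1] i k_def by simp
    have y: "q1 < ?G i" using cnt_iff[OF sG i(1), of q1] i k_def hi[of q1] by simp
    show ?thesis
    proof (rule eq_thresh[of q1 _ _ "max (?F i) (?G i)"])
      fix w assume "q1 \<le> w" "w < max (?F i) (?G i)"
      then show "w < ?F i \<longleftrightarrow> w < ?G i" using hi[of w] cnt_iff[OF sF i(1), of w] cnt_iff[OF sG i(1), of w] by simp
    qed (use x y in auto)
  qed
  have m1: "cnt ?F (q1 - 1) = cnt ?G (q1 - 1) + 1" using rel[of "q1 - 1"] o by simp
  have m2: "cnt ?F (q1 - 1) \<le> cnt ?F q1 + 1" by (rule cnt_step[OF sF])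
  have m3: "cnt ?G q1 \<le> cnt ?G (q1 - 1)" by (rule cnt_mono[OF sG]) simp
  have m4: "cnt ?F (q1 - 1) = k" "cnt ?G (q1 - 1) = k - 1" using m1 m2 m3 hi[of q1] k_def by auto
  have Fk: "q1 - 1 < ?F k" using cnt_iff[OF sF k1, of "q1 - 1"] m4 by simp
  have Gk: "\<not> q1 - 1 < ?G k" using cnt_iff[OF sG k1, of "q1 - 1"] m4 k1 by simp
  have "(\<Sum>i=1..k. ?F i - ?G i) = (\<Sum>i=1..k - 1. ?F i - ?G i) + (?F k - ?G k)"
  proof -
    obtain k0 where "k = Suc k0" using k1 by (cases k) auto
    then show ?thesis by (simp add: sum.cl_ivl_Suc)
  qed
  also have "(\<Sum>i=1..k - 1. ?F i - ?G i) = 0" by (rule sum.neutral) (use eq in auto)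
  finally have "0 < (\<Sum>i=1..k. ?F i - ?G i)" using Fk Gk by simp
  then have "(\<Sum>i=1..k. int (part mu i)) < (\<Sum>i=1..k. int (part la i))"
    using sum_parts_bvf[of "part la" k "part mu" t] by simp
  moreover have "(\<Sum>i=1..k. part la i) \<le> (\<Sum>i=1..k. part mu i)" using dl unfolding dom_le_def by blast
  then have "(\<Sum>i=1..k. int (part la i)) \<le> (\<Sum>i=1..k. int (part mu i))" by (metis of_nat_le_iff of_nat_sum)
  ultimately show False by simp
qed

lemma part_le_psize: "part la i \<le> psize la"
  unfolding part_def psize_def by (auto intro: member_le_sum_list)

lemma diag_rows: "(i, j) \<in> diagram la \<Longrightarrow> 1 \<le> i \<and> i \<le> length la"
  unfolding diagram_def part_def by (auto split: if_splits)

lemma finite_diagram: "finite (diagram la)"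
proof -
  have "diagram la \<subseteq> {1..length la} \<times> {0..psize la}"
  proof
    fix a assume a: "a \<in> diagram la"
    obtain i j where ij: "a = (i, j)" by (cases a)
    have "1 \<le> i \<and> i \<le> length la" using diag_rows a ij by simp
    moreover have "j \<le> psize la" using a ij part_le_psize[of la i] unfolding diagram_def by simp
    ultimately show "a \<in> {1..length la} \<times> {0..psize la}" using ij by simp
  qed
  then show ?thesis by (rule finite_subset) simp
qed

lemma un_swap: "X = (Z \<union> A) \<union> T \<Longrightarrow> Y = (Z \<union> B) \<union> T \<Longrightarrow> X \<union> B = Y \<union> A"
  by blast

lemma disj2: "a \<notin> X \<Longrightarrow> b \<notin> X \<Longrightarrow> X \<inter> {a, b} = {}"
  by blast

lemma is_partition_nil: "is_partition []" unfolding is_partition_def by simp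

lemma NOTIN:
  fixes C D Z :: "'a set"
  assumes "finite C" "card (C \<inter> D) = r - 2" "Z \<subseteq> C \<inter> D" "r - 2 \<le> card Z" "e \<in> C \<inter> D" "e \<notin> Z"
  shows False
proof -
  have "insert e Z \<subseteq> C \<inter> D" using assms by auto
  then have "card (insert e Z) \<le> card (C \<inter> D)" using assms(1) by (meson card_mono finite_Int)
  moreover have "finite Z" using assms(1,3) by (meson finite_Int finite_subset)
  then have "card (insert e Z) = card Z + 1" using assms(6) by simp
  ultimately show False using assms(2,4) by simp
qed

theorem mainTheorem8:
  fixes n l m r d d' :: nat and sl :: "nat \<Rightarrow> int"
    and La Mu :: "nat \<Rightarrow> nat list" and la mu :: "nat list"
  defines "s \<equiv> total_charge l sl"
  defines "\<alpha> \<equiv> beta_vec r s la"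
  defines "\<beta> \<equiv> beta_vec r s mu"
  defines "\<theta> \<equiv> diagram la - (diagram la \<inter> diagram mu)"
  defines "\<theta>' \<equiv> diagram mu - (diagram la \<inter> diagram mu)"
  defines "h \<equiv> card \<theta>"
  defines "y \<equiv> tail_row \<theta>'" and "y' \<equiv> head_row \<theta>'"
  defines "x' \<equiv> tail_row \<theta>" and "x \<equiv> head_row \<theta>"
  defines "rb \<equiv> (\<lambda>b. card {i \<in> {1..r}. d_of n l (\<alpha> i) = b})"
  assumes n: "1 \<le> n" and l: "1 \<le> l" and m: "1 \<le> m"
  assumes H: "Hcond n l m sl La Mu la mu r"
  \<comment> \<open>the facts recorded under (H) in the paper\<close>
  assumes ribbons: "ribbon \<theta>" "ribbon \<theta>'" "card \<theta>' = h"
  assumes alphabeta: "{\<alpha> i | i. i \<in> {1..r} \<and> i \<noteq> x' \<and> i \<noteq> y'} = {\<beta> j | j. j \<in> {1..r} \<and> j \<noteq> x \<and> j \<noteq> y}"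
    "\<alpha> y' = \<beta> y - int h" "\<alpha> x' = \<beta> x + int h"
  assumes J: "J1 l La Mu d d' \<or> (J2 l La Mu d \<and> d' = d)"
  shows
    "({d_of n l (\<beta> x), d_of n l (\<beta> y)} = {d_of n l (\<beta> x + int h), d_of n l (\<beta> y - int h)} \<and>
      {d_of n l (\<beta> x + int h), d_of n l (\<beta> y - int h)} = {d, d'} \<and>
      (\<forall>b\<in>{1..l}. card {i \<in> {1..r}. d_of n l (\<alpha> i) = b} = card {i \<in> {1..r}. d_of n l (\<beta> i) = b}))
   \<and> (J1 l La Mu d d' \<longrightarrow>
       (let g = beta_vec (rb d) (sl d) (La d); e = beta_vec (rb d) (sl d) (Mu d);
            g' = beta_vec (rb d') (sl d') (La d'); e' = beta_vec (rb d') (sl d') (Mu d');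
            \<rho> = diagram (La d) - diagram (Mu d); \<rho>' = diagram (Mu d') - diagram (La d');
            b0 = tail_row \<rho>; c0 = head_row \<rho>; b0' = tail_row \<rho>'; c0' = head_row \<rho>';
            hh = int (card \<rho>)
        in d_of n l (\<beta> x) = d \<and> d_of n l (\<beta> y) = d' \<and>
           (\<forall>k k'. {k, k'} = {\<beta> x + int h, \<beta> y - int h} \<and> d_of n l k = d \<and> d_of n l k' = d' \<longrightarrow>
              e c0 = phi n l (\<beta> x) \<and> g b0 = phi n l k \<and> g' c0' = phi n l k' \<and>
              e' b0' = phi n l (\<beta> y) \<and>
              hh = phi n l k - phi n l (\<beta> x) \<and> phi n l k - phi n l (\<beta> x) = phi n l (\<beta> y) - phi n l k')))
   \<and> (J2 l La Mu d \<longrightarrow>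
       (let g = beta_vec (rb d) (sl d) (La d); e = beta_vec (rb d) (sl d) (Mu d);
            \<rho> = diagram (La d) - (diagram (La d) \<inter> diagram (Mu d));
            \<rho>' = diagram (Mu d) - (diagram (La d) \<inter> diagram (Mu d));
            b0 = tail_row \<rho>; c0 = head_row \<rho>; b0' = tail_row \<rho>'; c0' = head_row \<rho>';
            hh = int (card \<rho>)
        in dom_lt (La d) (Mu d) \<and>
           e c0 = phi n l (\<beta> x) \<and> g b0 = phi n l (\<beta> x + int h) \<and>
           g c0' = phi n l (\<beta> y - int h) \<and> e b0' = phi n l (\<beta> y) \<and>
           hh = phi n l (\<beta> x + int h) - phi n l (\<beta> x) \<and>
           phi n l (\<beta> x + int h) - phi n l (\<beta> x) = phi n l (\<beta> y) - phi n l (\<beta> y - int h)))"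
  proof -
  from H have mpL: "multipart l m La" and mpM: "multipart l m Mu" and pla: "is_partition la" and pmu: "is_partition mu"
    and cL: "corr n l sl La la" and cM: "corr n l sl Mu mu" and mpr: "mprec n l sl La Mu"
    and rla: "psize la = r" and rmu: "psize mu = r"
    and cardB: "card (Bset (total_charge l sl) la \<inter> Bset (total_charge l sl) mu) = r - 2"
    unfolding Hcond_def by auto
  have pLa: "is_partition (La b)" for b
    using mpL is_partition_nil unfolding multipart_def by (cases "1 \<le> b \<and> b \<le> l") auto
  have pMu: "is_partition (Mu b)" for b
    using mpM is_partition_nil unfolding multipart_def by (cases "1 \<le> b \<and> b \<le> l") auto
  have dlt: "dom_lt la mu" using mpr pla pmu cL cM unfolding mprec_def by blast
  then have dle: "dom_le la mu" unfolding dom_lt_def by simp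
  let ?F = "bvf s (part la)" and ?G = "bvf s (part mu)"
  have sF: "sdec ?F" by (rule sdec_bvf[OF pfun_part[OF pla]])
  have sG: "sdec ?G" by (rule sdec_bvf[OF pfun_part[OF pmu]])
  have alF: "\<alpha> i = ?F i" if "1 \<le> i" "i \<le> r" for i unfolding \<alpha>_def using that by (rule beta_bvf)
  have beG: "\<beta> i = ?G i" if "1 \<le> i" "i \<le> r" for i unfolding \<beta>_def using that by (rule beta_bvf)
  have lenla: "length la \<le> r" using length_le_psize[OF pla] rla by simp
  have lenmu: "length mu \<le> r" using length_le_psize[OF pmu] rmu by simp
  have FT: "?F i = ?G i" if "r < i" for i using that lenla lenmu part_zero[of la i] part_zero[of mu i] by (simp add: bvf_def)
  define Nm where "Nm = (\<lambda>i. min (part la i) (part mu i))"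
  have th: "\<theta> = diagF (part la) - diagF Nm" unfolding \<theta>_def Nm_def diagram_diagF diag_inter ..
  have th': "\<theta>' = diagF (part mu) - diagF Nm" unfolding \<theta>'_def Nm_def diagram_diagF diag_inter ..
  have pN: "pfun Nm" unfolding Nm_def by (rule pfun_min[OF pfun_part[OF pla] pfun_part[OF pmu]])
  have finth: "finite \<theta>" unfolding \<theta>_def using finite_diagram[of la] by auto
  have finth': "finite \<theta>'" unfolding \<theta>'_def using finite_diagram[of mu] by auto
  have L1a: "ribbon_head \<theta> \<in> \<theta>" "ribbon_tail \<theta> \<in> \<theta>"
    using L1[OF pfun_part[OF pla] pN] ribbons(1) finth unfolding th by auto
  have L1b: "ribbon_head \<theta>' \<in> \<theta>'" "ribbon_tail \<theta>' \<in> \<theta>'"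
    using L1[OF pfun_part[OF pmu] pN] ribbons(2) finth' unfolding th' by auto
  have rowsa: "1 \<le> fst a \<and> fst a \<le> r" if "a \<in> \<theta>" for a
    using that diag_rows[of "fst a" "snd a" la] lenla unfolding \<theta>_def by auto
  have rowsb: "1 \<le> fst a \<and> fst a \<le> r" if "a \<in> \<theta>'" for a
    using that diag_rows[of "fst a" "snd a" mu] lenmu unfolding \<theta>'_def by auto
  have xr: "x \<in> {1..r}" "x' \<in> {1..r}" "y \<in> {1..r}" "y' \<in> {1..r}"
    using rowsa[OF L1a(1)] rowsa[OF L1a(2)] rowsb[OF L1b(1)] rowsb[OF L1b(2)]
    unfolding x_def x'_def y_def y'_def head_row_def tail_row_def by auto
  have h1: "1 \<le> h"
  proof -
    have "\<theta> \<noteq> {}" using ribbons(1) unfolding ribbon_def by simp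
    then show ?thesis unfolding h_def using finth by (simp add: Suc_le_eq card_gt_0_iff)
  qed
  have hx: "?F x' = ?G x + int h" "?F y' = ?G y - int h"
    using alphabeta(2,3) alF[of x'] alF[of y'] beG[of x] beG[of y] xr by auto
  define Z where "Z = ?G ` ({1..r} - {x, y})"
  have Zeq: "?F ` ({1..r} - {x', y'}) = Z"
  proof -
    have "{\<alpha> i | i. i \<in> {1..r} \<and> i \<noteq> x' \<and> i \<noteq> y'} = ?F ` ({1..r} - {x', y'})"
      using alF by force
    moreover have "{\<beta> j | j. j \<in> {1..r} \<and> j \<noteq> x \<and> j \<noteq> y} = Z"
      unfolding Z_def using beG by force
    ultimately show ?thesis using alphabeta(1) by simp
  qed
  have Bla: "Bset (total_charge l sl) la = ?F ` {1..r}"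
    unfolding Bset_def rla s_def[symmetric] using alF[unfolded \<alpha>_def] by force
  have Bmu: "Bset (total_charge l sl) mu = ?G ` {1..r}"
    unfolding Bset_def rmu s_def[symmetric] using beG[unfolded \<beta>_def] by force
  have cardI: "card (?F ` {1..r} \<inter> ?G ` {1..r}) = r - 2" using cardB unfolding Bla Bmu .
  have injF: "inj_on ?F {1..}" using sdec_inj[OF sF] by (auto simp: inj_on_def)
  have injG: "inj_on ?G {1..}" using sdec_inj[OF sG] by (auto simp: inj_on_def)
  have cZ: "r - 2 \<le> card Z"
  proof -
    have "card Z = card ({1..r} - {x, y})" unfolding Z_def
      by (rule card_image) (rule inj_on_subset[OF injG], auto)
    also have "\<dots> = r - card {x, y}" using xr by (subst card_Diff_subset) auto
    moreover have "card {x, y} \<le> 2" by (simp add: card_insert_if)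
    ultimately show ?thesis by simp
  qed
  have ZI: "Z \<subseteq> ?F ` {1..r} \<inter> ?G ` {1..r}" using Zeq[symmetric] unfolding Z_def by auto
  have notin: False if "e \<in> ?F ` {1..r}" "e \<in> ?G ` {1..r}" "e \<notin> Z" for e
    by (rule NOTIN[OF _ cardI ZI cZ _ that(3)]) (use that in auto)
  have ZG: "?G i \<notin> Z" if "i \<in> {x, y}" for i
  proof
    assume "?G i \<in> Z"
    then obtain j where "j \<in> {1..r} - {x, y}" "?G i = ?G j" unfolding Z_def by blast
    then show False using inj_onD[OF injG] that xr by fastforce
  qed
  have ZF: "?F i \<notin> Z" if "i \<in> {x', y'}" for i
  proof
    assume "?F i \<in> Z"
    then obtain j where "j \<in> {1..r} - {x', y'}" "?F i = ?F j" unfolding Zeq[symmetric] by blast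
    then show False using inj_onD[OF injF] that xr by fastforce
  qed
  have nX: "?G i \<notin> ?F ` {1..}" if i: "i \<in> {x, y}" for i
  proof
    assume "?G i \<in> ?F ` {1..}"
    then obtain j where j: "1 \<le> j" "?G i = ?F j" by auto
    have ir: "1 \<le> i" "i \<le> r" using i xr by auto
    show False
    proof (cases "j \<le> r")
      case True
      then have "?G i \<in> ?F ` {1..r}" using j by auto
      moreover have "?G i \<in> ?G ` {1..r}" using ir by auto
      ultimately show False using notin[of "?G i"] ZG[OF i] by blast
    next
      case False
      then have "?G i = ?G j" using j FT by simp
      then show False using inj_onD[OF injG] ir j False by fastforce
    qed
  qed
  have nY: "?F i \<notin> ?G ` {1..}" if i: "i \<in> {x', y'}" for i
  proof
    assume "?F i \<in> ?G ` {1..}"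
    then obtain j where j: "1 \<le> j" "?F i = ?G j" by auto
    have ir: "1 \<le> i" "i \<le> r" using i xr by auto
    show False
    proof (cases "j \<le> r")
      case True
      then have "?F i \<in> ?G ` {1..r}" using j by auto
      moreover have "?F i \<in> ?F ` {1..r}" using ir by auto
      ultimately show False using notin[of "?F i"] ZF[OF i] by blast
    next
      case False
      then have "?F i = ?F j" using j FT by simp
      then show False using inj_onD[OF injF] ir j False by fastforce
    qed
  qed
  have eqXY: "?F ` {1..} \<union> {?G x, ?G y} = ?G ` {1..} \<union> {?F x', ?F y'}"
  proof -
    have U: "{1..} = {1..r} \<union> {Suc r..}" by auto
    have T: "?F ` {Suc r..} = ?G ` {Suc r..}" by (rule image_cong) (use FT in auto)
    have F1: "?F ` {1..r} = Z \<union> {?F x', ?F y'}"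
    proof -
      have e: "{1..r} = ({1..r} - {x', y'}) \<union> {x', y'}" using xr by auto
      have "?F ` {1..r} = ?F ` (({1..r} - {x', y'}) \<union> {x', y'})" by (rule arg_cong[OF e])
      also have "\<dots> = ?F ` ({1..r} - {x', y'}) \<union> {?F x', ?F y'}" by (simp only: image_Un image_insert image_empty)
      finally show ?thesis unfolding Zeq .
    qed
    have G1: "?G ` {1..r} = Z \<union> {?G x, ?G y}"
    proof -
      have e: "{1..r} = ({1..r} - {x, y}) \<union> {x, y}" using xr by auto
      have "?G ` {1..r} = ?G ` (({1..r} - {x, y}) \<union> {x, y})" by (rule arg_cong[OF e])
      also have "\<dots> = ?G ` ({1..r} - {x, y}) \<union> {?G x, ?G y}" by (simp only: image_Un image_insert image_empty)
      finally show ?thesis unfolding Z_def .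
    qed
    have "?F ` {1..} = ?F ` {1..r} \<union> ?F ` {Suc r..}" unfolding U by (rule image_Un)
    moreover have "?G ` {1..} = ?G ` {1..r} \<union> ?G ` {Suc r..}" unfolding U by (rule image_Un)
    ultimately show ?thesis unfolding F1 G1 T by (rule un_swap)
  qed
  have dA: "?F ` {1..} \<inter> {?G x, ?G y} = {}" by (rule disj2) (rule nX, simp)+
  have dB: "?G ` {1..} \<inter> {?F x', ?F y'} = {}" by (rule disj2) (rule nY, simp)+
  have cc: "card {?G x, ?G y} = card {?F x', ?F y'}"
    by (rule CHARGEcard[OF pfun_part[OF pla] pfun_part[OF pmu] _ _ eqXY dA dB]) auto
  have uv: "?G x \<noteq> ?G y"
  proof
    assume e: "?G x = ?G y"
    have "?F x' \<noteq> ?F y'" using hx e h1 by simp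
    then show False using cc e by simp
  qed
  have uhvh: "?F x' \<noteq> ?F y'" using cc uv by auto
  have relB: "cnt ?F w + (if w < ?G x then 1 else 0) + (if w < ?G y then 1 else 0)
      = cnt ?G w + (if w < ?G x + int h then 1 else 0) + (if w < ?G y - int h then 1 else 0)" for w
  proof -
    have "cnt ?F w + card {a \<in> {?G x, ?G y}. w < a} = cnt ?G w + card {a \<in> {?F x', ?F y'}. w < a}"
      by (rule CONV[OF sF sG _ _ eqXY dA dB]) auto
    then show ?thesis using card_two_if[OF uv, of w] card_two_if[OF uhvh, of w] hx by simp
  qed
  have o1: "?G x + int h < ?G y"
  proof (rule ccontr)
    assume a: "\<not> ?thesis"
    have "?G y \<in> ?G ` {1..}" using xr by auto
    moreover have "?G x + int h \<notin> ?G ` {1..}" using nY[of x'] hx by simp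
    ultimately have "?G y \<noteq> ?G x + int h" by metis
    then have "?G y < ?G x + int h" using a by simp
    then show False using STEP3[OF pla pmu dle relB] h1 by simp
  qed
  let ?N = "bvf s Nm"
  have sN: "sdec ?N" by (rule sdec_bvf[OF pN])
  have cN: "cnt ?N w = min (cnt ?F w) (cnt ?G w)" for w
    unfolding Nm_def bvf_min by (rule cnt_min[OF sF sG])
  define M1 where "M1 = min (?G x + int h) (?G y - int h)"
  have RF: "cnt ?F w = cnt ?N w + (if ?G x \<le> w \<and> w < M1 then 1 else 0)" for w
    using MINB(1)[where cP="cnt ?F" and cQ="cnt ?G" and cN="cnt ?N", OF relB[of w] cN[of w]] o1 h1 unfolding M1_def by simp
  have uM: "?G x < M1" using o1 h1 unfolding M1_def by simp
  have "tail_row \<theta> = cnt ?F M1 + 1" unfolding th by (rule L2diag(5)[OF sF sN RF uM])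
  then have "?F x' = M1" using L2(1)[OF sF sN RF uM] unfolding x'_def by simp
  then have "?G x + int h \<le> ?G y - int h" using hx unfolding M1_def by simp
  then have ord: "?G x + int h < ?G y - int h" using uhvh hx by simp
  interpret B: bigab n l r sl La Mu la mu x x' y y' h
    by (unfold_locales; (unfold s_def[symmetric])?;
        (fact | (rule Zeq[unfolded Z_def]) | (rule nX; simp) | (rule nY; simp) | (rule pLa) | (rule pMu) | (use xr in simp)))
  have uG: "\<beta> x = ?G x" "\<beta> y = ?G y" using beG xr by auto
  have rbeq: "rb = (\<lambda>b. card {i \<in> {1..r}. d_of n l (?F i) = b})"
    unfolding rb_def by (rule ext, rule arg_cong[where f=card]) (use alF in auto)
  note dsets = B.dsets[folded s_def]
  have P1a: "{d_of n l (\<beta> x), d_of n l (\<beta> y)} = {d_of n l (\<beta> x + int h), d_of n l (\<beta> y - int h)}"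
    using dsets uG by simp
  have P1b: "{d_of n l (\<beta> x + int h), d_of n l (\<beta> y - int h)} = {d, d'}"
    using J
  proof
    assume J1: "J1 l La Mu d d'"
    show ?thesis using B.J1dsets[folded s_def, OF J1] P1a uG by simp
  next
    assume J2: "J2 l La Mu d \<and> d' = d"
    show ?thesis using B.J2main(3,4)[folded s_def, OF conjunct1[OF J2]] conjunct2[OF J2] uG by simp
  qed
  have P1c: "\<forall>b\<in>{1..l}. card {i \<in> {1..r}. d_of n l (\<alpha> i) = b} = card {i \<in> {1..r}. d_of n l (\<beta> i) = b}"
  proof
    fix b
    have "{i \<in> {1..r}. d_of n l (\<alpha> i) = b} = {i \<in> {1..r}. d_of n l (?F i) = b}" using alF by auto
    moreover have "{i \<in> {1..r}. d_of n l (\<beta> i) = b} = {i \<in> {1..r}. d_of n l (?G i) = b}" using beG by auto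
    ultimately show "card {i \<in> {1..r}. d_of n l (\<alpha> i) = b} = card {i \<in> {1..r}. d_of n l (\<beta> i) = b}"
      using B.counts[folded s_def, of b] by simp
  qed
  have P2: "J1 l La Mu d d' \<longrightarrow>
       (let g = beta_vec (rb d) (sl d) (La d); e = beta_vec (rb d) (sl d) (Mu d);
            g' = beta_vec (rb d') (sl d') (La d'); e' = beta_vec (rb d') (sl d') (Mu d');
            \<rho> = diagram (La d) - diagram (Mu d); \<rho>' = diagram (Mu d') - diagram (La d');
            b0 = tail_row \<rho>; c0 = head_row \<rho>; b0' = tail_row \<rho>'; c0' = head_row \<rho>';
            hh = int (card \<rho>)
        in d_of n l (\<beta> x) = d \<and> d_of n l (\<beta> y) = d' \<and>
           (\<forall>k k'. {k, k'} = {\<beta> x + int h, \<beta> y - int h} \<and> d_of n l k = d \<and> d_of n l k' = d' \<longrightarrow>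
              e c0 = phi n l (\<beta> x) \<and> g b0 = phi n l k \<and> g' c0' = phi n l k' \<and>
              e' b0' = phi n l (\<beta> y) \<and>
              hh = phi n l k - phi n l (\<beta> x) \<and> phi n l k - phi n l (\<beta> x) = phi n l (\<beta> y) - phi n l k'))"
  proof
    assume J1: "J1 l La Mu d d'"
    have dne: "d \<noteq> d'" using J1 unfolding J1_def by simp
    obtain k0 k0' where kk: "{k0, k0'} = {?G x + int h, ?G y - int h}" "d_of n l k0 = d" "d_of n l k0' = d'"
    proof (cases "d_of n l (?G x + int h) = d")
      case True
      then have "d_of n l (?G y - int h) = d'" using P1b uG dne by (auto simp: doubleton_eq_iff)
      then show ?thesis using that[of "?G x + int h" "?G y - int h"] True by simp
    next
      case False
      then have "d_of n l (?G x + int h) = d'" "d_of n l (?G y - int h) = d" using P1b uG by (auto simp: doubleton_eq_iff)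
      then show ?thesis using that[of "?G y - int h" "?G x + int h"] by (simp add: insert_commute)
    qed
    note M0 = B.J1main[folded s_def, OF J1 kk]
    have du: "d_of n l (\<beta> x) = d" and dv: "d_of n l (\<beta> y) = d'" using M0(1,2) uG by simp_all
    have rest: "beta_vec (rb d) (sl d) (Mu d) (head_row (diagram (La d) - diagram (Mu d))) = phi n l (\<beta> x) \<and>
        beta_vec (rb d) (sl d) (La d) (tail_row (diagram (La d) - diagram (Mu d))) = phi n l k \<and>
        beta_vec (rb d') (sl d') (La d') (head_row (diagram (Mu d') - diagram (La d'))) = phi n l k' \<and>
        beta_vec (rb d') (sl d') (Mu d') (tail_row (diagram (Mu d') - diagram (La d'))) = phi n l (\<beta> y) \<and>
        int (card (diagram (La d) - diagram (Mu d))) = phi n l k - phi n l (\<beta> x) \<and>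
        phi n l k - phi n l (\<beta> x) = phi n l (\<beta> y) - phi n l k'"
      if "{k, k'} = {\<beta> x + int h, \<beta> y - int h} \<and> d_of n l k = d \<and> d_of n l k' = d'" for k k'
    proof -
      have kk': "{k, k'} = {?G x + int h, ?G y - int h}" "d_of n l k = d" "d_of n l k' = d'" using that uG by auto
      note M = B.J1main[folded s_def, OF J1 kk']
      show ?thesis using M(3-8) uG unfolding rbeq by simp
    qed
    show "let g = beta_vec (rb d) (sl d) (La d); e = beta_vec (rb d) (sl d) (Mu d);
            g' = beta_vec (rb d') (sl d') (La d'); e' = beta_vec (rb d') (sl d') (Mu d');
            \<rho> = diagram (La d) - diagram (Mu d); \<rho>' = diagram (Mu d') - diagram (La d');
            b0 = tail_row \<rho>; c0 = head_row \<rho>; b0' = tail_row \<rho>'; c0' = head_row \<rho>';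
            hh = int (card \<rho>)
        in d_of n l (\<beta> x) = d \<and> d_of n l (\<beta> y) = d' \<and>
           (\<forall>k k'. {k, k'} = {\<beta> x + int h, \<beta> y - int h} \<and> d_of n l k = d \<and> d_of n l k' = d' \<longrightarrow>
              e c0 = phi n l (\<beta> x) \<and> g b0 = phi n l k \<and> g' c0' = phi n l k' \<and>
              e' b0' = phi n l (\<beta> y) \<and>
              hh = phi n l k - phi n l (\<beta> x) \<and> phi n l k - phi n l (\<beta> x) = phi n l (\<beta> y) - phi n l k')"
      unfolding Let_def using du dv rest by blast
  qed
  have P3: "J2 l La Mu d \<longrightarrow>
       (let g = beta_vec (rb d) (sl d) (La d); e = beta_vec (rb d) (sl d) (Mu d);
            \<rho> = diagram (La d) - (diagram (La d) \<inter> diagram (Mu d));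
            \<rho>' = diagram (Mu d) - (diagram (La d) \<inter> diagram (Mu d));
            b0 = tail_row \<rho>; c0 = head_row \<rho>; b0' = tail_row \<rho>'; c0' = head_row \<rho>';
            hh = int (card \<rho>)
        in dom_lt (La d) (Mu d) \<and>
           e c0 = phi n l (\<beta> x) \<and> g b0 = phi n l (\<beta> x + int h) \<and>
           g c0' = phi n l (\<beta> y - int h) \<and> e b0' = phi n l (\<beta> y) \<and>
           hh = phi n l (\<beta> x + int h) - phi n l (\<beta> x) \<and>
           phi n l (\<beta> x + int h) - phi n l (\<beta> x) = phi n l (\<beta> y) - phi n l (\<beta> y - int h))"
  proof
    assume J2: "J2 l La Mu d"
    note M = B.J2main[folded s_def, OF J2]
    show "let g = beta_vec (rb d) (sl d) (La d); e = beta_vec (rb d) (sl d) (Mu d);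
            \<rho> = diagram (La d) - (diagram (La d) \<inter> diagram (Mu d));
            \<rho>' = diagram (Mu d) - (diagram (La d) \<inter> diagram (Mu d));
            b0 = tail_row \<rho>; c0 = head_row \<rho>; b0' = tail_row \<rho>'; c0' = head_row \<rho>';
            hh = int (card \<rho>)
        in dom_lt (La d) (Mu d) \<and>
           e c0 = phi n l (\<beta> x) \<and> g b0 = phi n l (\<beta> x + int h) \<and>
           g c0' = phi n l (\<beta> y - int h) \<and> e b0' = phi n l (\<beta> y) \<and>
           hh = phi n l (\<beta> x + int h) - phi n l (\<beta> x) \<and>
           phi n l (\<beta> x + int h) - phi n l (\<beta> x) = phi n l (\<beta> y) - phi n l (\<beta> y - int h)"
      unfolding Let_def rbeq using M(5-11) uG by simp
  qed
  show ?thesis using P1a P1b P1c P2 P3 by blast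
qed


end
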